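(* Under the standing assumptions, there exists $\Lambda>0$ such that for every $\lambda>\Lambda$ the BBM-type operator $\mathcal{A}^\lambda$ has no eigenvalues in $\{z\in\mathbb{C}:\operatorname{Re}z\le0\}$.
   Context: Standing assumptions: $f:\mathbb{R}\to\mathbb{R}$ is $C^1$ with $f(0)=f'(0)=0$. $\mathcal{M}$ is the Fourier multiplier with symbol $\alpha:\mathbb{R}\to[0,\infty)$, locally bounded, with $a|k|^m\le\alpha(k)\le b|k|^m$ for all large $|k|$ ($m\ge1$, $a,b>0$). $c>1$ and $u_c\in H^m(\mathbb{R})$ is a real solution of $\mathcal{M}u_c+(1-\frac1c)u_c-\frac1cf(u_c)=0$ with $u_c(x)\to0$ as $|x|\to\infty$ and $f'(u_c)\not\equiv0$. With $\mathcal{E}^{\lambda,-}$ the Fourier multiplier with symbol $\frac{\lambda}{\lambda-ick}$, $\mathcal{A}^\lambda=\mathcal{M}+1-\frac1c(1-\mathcal{E}^{\lambda,-})(1+f'(u_c))$, acting $H^m\to L^2$. *)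

theory Defs
  imports "HOL-Analysis.Analysis"
begin

text \<open>Square-integrable complex-valued functions on the real line (as functions;
  equalities between L2 elements are understood almost everywhere).\<close>
definition L2 :: "(real \<Rightarrow> complex) \<Rightarrow> bool" where
  "L2 u \<longleftrightarrow> u \<in> borel_measurable lborel \<and> integrable lborel (\<lambda>x. (cmod (u x))\<^sup>2)"

text \<open>Plancherel Fourier transform on L2, convention
  hat u k = lim_{R\<rightarrow>\<infinity>} integral over [-R,R] of u x * exp(-i k x) (limit in L2).\<close>
definition is_fourier :: "(real \<Rightarrow> complex) \<Rightarrow> (real \<Rightarrow> complex) \<Rightarrow> bool" where
  "is_fourier u g \<longleftrightarrow> L2 u \<and> L2 g \<and>
     ((\<lambda>R. \<integral>\<^sup>+ k. ennreal ((cmod (g k - (LINT x:{-R..R}|lborel. u x * cis (- (k * x)))))\<^sup>2) \<partial>lborel)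
        \<longlongrightarrow> 0) at_top"

definition Hm :: "real \<Rightarrow> (real \<Rightarrow> complex) \<Rightarrow> bool" where
  "Hm m u \<longleftrightarrow> L2 u \<and> (\<exists>g. is_fourier u g \<and> L2 (\<lambda>k. complex_of_real ((1 + k\<^sup>2) powr (m / 2)) * g k))"

definition fmult :: "(real \<Rightarrow> complex) \<Rightarrow> (real \<Rightarrow> complex) \<Rightarrow> (real \<Rightarrow> complex) \<Rightarrow> bool" where
  "fmult \<sigma> u v \<longleftrightarrow> (\<exists>g. is_fourier u g \<and> is_fourier v (\<lambda>k. \<sigma> k * g k))"

definition E_symbol :: "real \<Rightarrow> real \<Rightarrow> real \<Rightarrow> complex" where
  "E_symbol c lam k = complex_of_real lam / (complex_of_real lam - \<i> * complex_of_real (c * k))"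

text \<open>Graph of A^lambda = M + 1 - (1/c)(1 - E^{lambda,-})(1 + f'(u_c)):  A_rel ... w v  means  A^lambda w = v (a.e.).\<close>
definition A_rel :: "(real \<Rightarrow> real) \<Rightarrow> real \<Rightarrow> (real \<Rightarrow> real) \<Rightarrow> (real \<Rightarrow> real) \<Rightarrow> real
     \<Rightarrow> (real \<Rightarrow> complex) \<Rightarrow> (real \<Rightarrow> complex) \<Rightarrow> bool" where
  "A_rel \<alpha> c f' uc lam w v \<longleftrightarrow>
     (\<exists>v1 v2. fmult (\<lambda>k. complex_of_real (\<alpha> k)) w v1 \<and>
              fmult (\<lambda>k. 1 - E_symbol c lam k) (\<lambda>x. (1 + complex_of_real (f' (uc x))) * w x) v2 \<and>
              (AE x in lborel. v x = v1 x + w x - v2 x / complex_of_real c))"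

definition is_eigenvalue_A :: "(real \<Rightarrow> real) \<Rightarrow> real \<Rightarrow> real \<Rightarrow> (real \<Rightarrow> real) \<Rightarrow> (real \<Rightarrow> real) \<Rightarrow> real
     \<Rightarrow> complex \<Rightarrow> bool" where
  "is_eigenvalue_A \<alpha> m c f' uc lam z \<longleftrightarrow>
     (\<exists>w. Hm m w \<and> \<not> (AE x in lborel. w x = 0) \<and> A_rel \<alpha> c f' uc lam w (\<lambda>x. z * w x))"

end

theory Submission
  imports Defs "HOL-Probability.Sinc_Integral"
begin


lemma borel_measurable_cis[measurable]: "cis \<in> borel_measurable borel"
  by (intro borel_measurable_continuous_onI continuous_intros)

definition nn2 :: "(real \<Rightarrow> complex) \<Rightarrow> ennreal" where
  "nn2 u = (\<integral>\<^sup>+x. ennreal ((cmod (u x))\<^sup>2) \<partial>lborel)"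

lemma L2_iff: "L2 u \<longleftrightarrow> u \<in> borel_measurable borel \<and> nn2 u < \<infinity>"
proof -
  have "integrable lborel (\<lambda>x. (cmod (u x))\<^sup>2) \<longleftrightarrow> nn2 u < \<infinity>" if "u \<in> borel_measurable borel"
    using that unfolding nn2_def by (subst integrable_iff_bounded) auto
  moreover have "u \<in> borel_measurable lborel \<longleftrightarrow> u \<in> borel_measurable borel" by simp
  ultimately show ?thesis unfolding L2_def by blast
qed

lemma L2_meas: "L2 u \<Longrightarrow> u \<in> borel_measurable borel"
  by (simp add: L2_iff)

lemma L2_nn2: "L2 u \<Longrightarrow> nn2 u < \<infinity>"
  by (simp add: L2_iff)

lemma nn2_meas_le:
  assumes "\<And>x. cmod (u x) \<le> cmod (v x)"
  shows "nn2 u \<le> nn2 v"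
  unfolding nn2_def using assms by (intro nn_integral_mono) (auto intro!: power_mono)

lemma amgm_cmod: "cmod (a * b) \<le> ((cmod a)\<^sup>2 + (cmod b)\<^sup>2) / 2"
proof -
  have "0 \<le> (cmod a - cmod b)\<^sup>2" by simp
  then show ?thesis by (simp add: norm_mult power2_eq_square algebra_simps)
qed

lemma L2_prod_integrable:
  assumes "L2 u" "L2 v"
  shows "integrable lborel (\<lambda>x. u x * v x)"
proof (rule Bochner_Integration.integrable_bound)
  show "integrable lborel (\<lambda>x. ((cmod (u x))\<^sup>2 + (cmod (v x))\<^sup>2) / 2)"
    using assms unfolding L2_def by auto
  show "(\<lambda>x. u x * v x) \<in> borel_measurable lborel"
    using assms unfolding L2_def by auto
  show "AE x in lborel. norm (u x * v x) \<le> norm (((cmod (u x))\<^sup>2 + (cmod (v x))\<^sup>2) / 2)"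
    using amgm_cmod by (auto intro!: AE_I2 order_trans[OF amgm_cmod])
qed

lemma sq_lin_bound: "(cmod (a * x + b * y))\<^sup>2 \<le> 2 * (cmod a)\<^sup>2 * (cmod x)\<^sup>2 + 2 * (cmod b)\<^sup>2 * (cmod y)\<^sup>2"
proof -
  have "cmod (a * x + b * y) \<le> cmod a * cmod x + cmod b * cmod y"
    by (metis norm_mult norm_triangle_ineq)
  then have "(cmod (a * x + b * y))\<^sup>2 \<le> (cmod a * cmod x + cmod b * cmod y)\<^sup>2"
    by (simp add: power_mono)
  also have "\<dots> \<le> 2 * (cmod a)\<^sup>2 * (cmod x)\<^sup>2 + 2 * (cmod b)\<^sup>2 * (cmod y)\<^sup>2"
    using sum_squares_bound[of "cmod a * cmod x" "cmod b * cmod y"]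
    by (simp add: power2_eq_square algebra_simps)
  finally show ?thesis .
qed

lemma nn2_lin_bound:
  "nn2 (\<lambda>x. a * u x + b * v x) \<le> ennreal (2 * (cmod a)\<^sup>2) * nn2 u + ennreal (2 * (cmod b)\<^sup>2) * nn2 v"
  if "u \<in> borel_measurable borel" "v \<in> borel_measurable borel"
proof -
  have "nn2 (\<lambda>x. a * u x + b * v x) \<le> (\<integral>\<^sup>+x. ennreal (2 * (cmod a)\<^sup>2) * ennreal ((cmod (u x))\<^sup>2)
        + ennreal (2 * (cmod b)\<^sup>2) * ennreal ((cmod (v x))\<^sup>2) \<partial>lborel)"
    unfolding nn2_def
    by (intro nn_integral_mono) (simp add: ennreal_mult'[symmetric] ennreal_plus[symmetric] sq_lin_bound
        del: ennreal_plus)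
  also have "\<dots> = ennreal (2 * (cmod a)\<^sup>2) * nn2 u + ennreal (2 * (cmod b)\<^sup>2) * nn2 v"
    unfolding nn2_def using that by (simp add: nn_integral_add nn_integral_cmult)
  finally show ?thesis .
qed

lemma L2_lin:
  assumes "L2 u" "L2 v"
  shows "L2 (\<lambda>x. a * u x + b * v x)"
proof -
  have m: "u \<in> borel_measurable borel" "v \<in> borel_measurable borel" using assms L2_meas by auto
  have "nn2 (\<lambda>x. a * u x + b * v x) < \<infinity>"
    using nn2_lin_bound[OF m, of a b] L2_nn2[OF assms(1)] L2_nn2[OF assms(2)]
    by (simp add: ennreal_mult_less_top order_le_less_trans)
  then show ?thesis using m by (simp add: L2_iff)
qed


definition Fr :: "(real \<Rightarrow> complex) \<Rightarrow> real \<Rightarrow> real \<Rightarrow> complex" where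
  "Fr u R k = (LINT x:{-R..R}|lborel. u x * cis (- (k * x)))"

lemma is_fourier_Fr: "is_fourier u g \<longleftrightarrow> L2 u \<and> L2 g \<and>
   ((\<lambda>R. nn2 (\<lambda>k. g k - Fr u R k)) \<longlongrightarrow> 0) at_top"
  unfolding is_fourier_def nn2_def Fr_def ..

lemma L2_set_integrable:
  assumes "L2 u" and c: "c \<in> borel_measurable borel" "\<And>x. cmod (c x) \<le> 1"
  shows "set_integrable lborel {a..b} (\<lambda>x. u x * c x)"
proof -
  have L: "L2 (\<lambda>x. indicator {a..b} x * c x)"
  proof -
    have "nn2 (\<lambda>x. indicator {a..b} x * c x) \<le> (\<integral>\<^sup>+x. indicator {a..b} x \<partial>lborel)"
      unfolding nn2_def
      by (intro nn_integral_mono) (auto simp: indicator_def norm_mult power_le_one c)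
    also have "\<dots> < \<infinity>" by (simp add: emeasure_lborel_Icc_eq)
    finally show ?thesis using c by (simp add: L2_iff)
  qed
  have eq: "(\<lambda>x. indicat_real {a..b} x *\<^sub>R (u x * c x)) = (\<lambda>x. u x * (indicator {a..b} x * c x))"
    by (auto simp: indicator_def fun_eq_iff)
  from L2_prod_integrable[OF assms(1) L] show ?thesis
    unfolding set_integrable_def eq .
qed

lemma Fr_set_integrable:
  "L2 u \<Longrightarrow> set_integrable lborel {a..b} (\<lambda>x. u x * cis (- (k * x)))"
  by (rule L2_set_integrable) auto

lemma Fr_lin:
  assumes "L2 u" "L2 v"
  shows "Fr (\<lambda>x. a * u x + b * v x) R k = a * Fr u R k + b * Fr v R k"
proof -
  have "Fr (\<lambda>x. a * u x + b * v x) R k =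
     (LINT x:{-R..R}|lborel. a * (u x * cis (- (k * x))) + b * (v x * cis (- (k * x))))"
    unfolding Fr_def by (simp add: algebra_simps)
  also have "\<dots> = a * Fr u R k + b * Fr v R k"
    unfolding Fr_def
    using Fr_set_integrable[OF assms(1)] Fr_set_integrable[OF assms(2)]
    by (simp add: set_integral_add set_integrable_mult_right set_integral_mult_right)
  finally show ?thesis .
qed

lemma ennreal_tendsto_sandwich0:
  fixes f g :: "real \<Rightarrow> ennreal"
  assumes "\<And>R. f R \<le> g R" "(g \<longlongrightarrow> 0) at_top"
  shows "(f \<longlongrightarrow> 0) at_top"
  using assms by (intro tendsto_sandwich[OF _ _ tendsto_const assms(2)]) auto

lemma is_fourier_lin:
  assumes "is_fourier u g" "is_fourier v h"
  shows "is_fourier (\<lambda>x. a * u x + b * v x) (\<lambda>k. a * g k + b * h k)"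
proof -
  have u: "L2 u" "L2 g" "((\<lambda>R. nn2 (\<lambda>k. g k - Fr u R k)) \<longlongrightarrow> 0) at_top"
    and v: "L2 v" "L2 h" "((\<lambda>R. nn2 (\<lambda>k. h k - Fr v R k)) \<longlongrightarrow> 0) at_top"
    using assms by (auto simp: is_fourier_Fr)
  have meas: "(\<lambda>k. g k - Fr u R k) \<in> borel_measurable borel" "(\<lambda>k. h k - Fr v R k) \<in> borel_measurable borel" for R
  proof -
    have "(\<lambda>k. Fr u R k) \<in> borel_measurable borel" "(\<lambda>k. Fr v R k) \<in> borel_measurable borel"
      unfolding Fr_def set_lebesgue_integral_def using u(1) v(1) L2_meas
      by (auto intro!: lborel.borel_measurable_lebesgue_integral simp: split_beta')
    then show "(\<lambda>k. g k - Fr u R k) \<in> borel_measurable borel" "(\<lambda>k. h k - Fr v R k) \<in> borel_measurable borel"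
      using u(2) v(2) L2_meas by auto
  qed
  have "((\<lambda>R. nn2 (\<lambda>k. (a * g k + b * h k) - Fr (\<lambda>x. a * u x + b * v x) R k)) \<longlongrightarrow> 0) at_top"
  proof (rule ennreal_tendsto_sandwich0)
    fix R
    have "nn2 (\<lambda>k. (a * g k + b * h k) - Fr (\<lambda>x. a * u x + b * v x) R k)
        = nn2 (\<lambda>k. a * (g k - Fr u R k) + b * (h k - Fr v R k))"
      by (simp add: Fr_lin[OF u(1) v(1)] algebra_simps)
    also have "\<dots> \<le> ennreal (2 * (cmod a)\<^sup>2) * nn2 (\<lambda>k. g k - Fr u R k) + ennreal (2 * (cmod b)\<^sup>2) * nn2 (\<lambda>k. h k - Fr v R k)"
      by (rule nn2_lin_bound[OF meas])
    finally show "nn2 (\<lambda>k. (a * g k + b * h k) - Fr (\<lambda>x. a * u x + b * v x) R k) \<le> \<dots>" .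
  next
    show "((\<lambda>R. ennreal (2 * (cmod a)\<^sup>2) * nn2 (\<lambda>k. g k - Fr u R k) + ennreal (2 * (cmod b)\<^sup>2) * nn2 (\<lambda>k. h k - Fr v R k)) \<longlongrightarrow> 0) at_top"
      using tendsto_add[OF ennreal_tendsto_cmult[OF _ u(3)] ennreal_tendsto_cmult[OF _ v(3)]] by simp
  qed
  then show ?thesis
    using u v by (simp add: is_fourier_Fr L2_lin)
qed

lemma is_fourier_unique:
  assumes "is_fourier u g" "is_fourier u h"
  shows "AE k in lborel. g k = h k"
proof -
  have u: "L2 u" "L2 g" "((\<lambda>R. nn2 (\<lambda>k. g k - Fr u R k)) \<longlongrightarrow> 0) at_top"
    and v: "L2 h" "((\<lambda>R. nn2 (\<lambda>k. h k - Fr u R k)) \<longlongrightarrow> 0) at_top"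
    using assms by (auto simp: is_fourier_Fr)
  have meas: "(\<lambda>k. g k - Fr u R k) \<in> borel_measurable borel" "(\<lambda>k. h k - Fr u R k) \<in> borel_measurable borel" for R
  proof -
    have "(\<lambda>k. Fr u R k) \<in> borel_measurable borel"
      unfolding Fr_def set_lebesgue_integral_def using u(1) L2_meas
      by (auto intro!: lborel.borel_measurable_lebesgue_integral simp: split_beta')
    then show "(\<lambda>k. g k - Fr u R k) \<in> borel_measurable borel" "(\<lambda>k. h k - Fr u R k) \<in> borel_measurable borel"
      using u(2) v(1) L2_meas by auto
  qed
  have le: "nn2 (\<lambda>k. g k - h k) \<le> 2 * nn2 (\<lambda>k. g k - Fr u R k) + 2 * nn2 (\<lambda>k. h k - Fr u R k)" for R
  proof -
    have "nn2 (\<lambda>k. g k - h k) = nn2 (\<lambda>k. 1 * (g k - Fr u R k) + (-1) * (h k - Fr u R k))"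
      by (simp add: algebra_simps)
    also have "\<dots> \<le> ennreal (2 * (cmod 1)\<^sup>2) * nn2 (\<lambda>k. g k - Fr u R k) + ennreal (2 * (cmod (-1::complex))\<^sup>2) * nn2 (\<lambda>k. h k - Fr u R k)"
      by (rule nn2_lin_bound[OF meas])
    finally show ?thesis by simp
  qed
  have "((\<lambda>R. 2 * nn2 (\<lambda>k. g k - Fr u R k) + 2 * nn2 (\<lambda>k. h k - Fr u R k)) \<longlongrightarrow> 0) at_top"
    using tendsto_add[OF ennreal_tendsto_cmult[OF _ u(3)] ennreal_tendsto_cmult[OF _ v(2)]] by simp
  then have "nn2 (\<lambda>k. g k - h k) \<le> 0"
    by (intro tendsto_le[OF trivial_limit_at_top_linorder _ tendsto_const]) (auto intro: le always_eventually)
  then have "(\<integral>\<^sup>+k. ennreal ((cmod (g k - h k))\<^sup>2) \<partial>lborel) = 0" unfolding nn2_def by simp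
  then have "AE k in lborel. ennreal ((cmod (g k - h k))\<^sup>2) = 0"
    using u(2) v(1) L2_meas by (subst (asm) nn_integral_0_iff_AE) auto
  then show ?thesis by eventually_elim simp
qed

lemma is_fourier_cong_AE:
  assumes "is_fourier u g" "AE x in lborel. u x = v x" "v \<in> borel_measurable borel"
  shows "is_fourier v g"
proof -
  have u: "L2 u" "L2 g" "((\<lambda>R. nn2 (\<lambda>k. g k - Fr u R k)) \<longlongrightarrow> 0) at_top"
    using assms by (auto simp: is_fourier_Fr)
  have "Fr u R k = Fr v R k" for R k
    unfolding Fr_def set_lebesgue_integral_def
    by (rule integral_cong_AE) (use assms(2) u(1) L2_meas assms(3) in auto)
  moreover have "nn2 v = nn2 u"
    unfolding nn2_def by (rule nn_integral_cong_AE) (use assms(2) in auto)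
  ultimately show ?thesis using u assms(3) by (simp add: is_fourier_Fr L2_iff)
qed


lemma exp_real_half_integrable:
  assumes "c < 0"
  shows "set_integrable lborel (einterval 0 \<infinity>) (\<lambda>x::real. exp (c * x))"
proof -
  have "((\<lambda>x. exp (c * x) / c) \<longlongrightarrow> 0) at_top"
  proof -
    have "((\<lambda>x. exp (c * x)) \<longlongrightarrow> 0) at_top"
      using assms by (intro filterlim_compose[OF exp_at_bot] filterlim_tendsto_neg_mult_at_bot[OF tendsto_const])
        (auto intro: filterlim_ident)
    then show ?thesis by (rule tendsto_divide_zero)
  qed
  then show ?thesis
    using assms
    by (intro interval_integral_FTC_nonneg[where F="\<lambda>x. exp (c * x) / c" and A="1/c" and B=0])
       (auto intro!: derivative_eq_intros tendsto_eq_intros simp: ereal_tendsto_simps zero_ereal_def)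
qed

lemma exp_half:
  fixes z :: complex
  assumes "Re z < 0"
  shows "has_bochner_integral lborel (\<lambda>k. indicator {0<..} k *\<^sub>R exp (z * complex_of_real k)) (- 1 / z)"
proof -
  have z0: "z \<noteq> 0" using assms by auto
  have int: "set_integrable lborel (einterval 0 \<infinity>) (\<lambda>x. exp (z * complex_of_real x))"
  proof (rule set_integrable_bound[OF exp_real_half_integrable[OF assms]])
    show "AE x in lborel. x \<in> einterval 0 \<infinity> \<longrightarrow> norm (exp (z * complex_of_real x)) \<le> norm (exp (Re z * x))"
      by (auto simp: norm_exp_eq_Re)
    show "set_borel_measurable lborel (einterval 0 \<infinity>) (\<lambda>x. exp (z * complex_of_real x))"
      unfolding set_borel_measurable_def by measurable
  qed
  have lim: "((\<lambda>x. exp (z * complex_of_real x) / z) \<longlongrightarrow> 0) at_top"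
  proof -
    have "((\<lambda>x. exp (Re z * x)) \<longlongrightarrow> 0) at_top"
      using assms by (intro filterlim_compose[OF exp_at_bot] filterlim_tendsto_neg_mult_at_bot[OF tendsto_const])
        (auto intro: filterlim_ident)
    then have "((\<lambda>x. exp (Re z * x) / cmod z) \<longlongrightarrow> 0) at_top"
      by (rule tendsto_divide_zero)
    then have "((\<lambda>x. norm (exp (z * complex_of_real x) / z)) \<longlongrightarrow> 0) at_top"
      by (simp add: norm_divide norm_exp_eq_Re)
    then show ?thesis by (simp add: tendsto_norm_zero_iff)
  qed
  have der: "((\<lambda>x. exp (z * complex_of_real x) / z) has_vector_derivative exp (z * complex_of_real x)) (at x)" for x
  proof -
    have "((\<lambda>w. exp (z * w) / z) has_field_derivative exp (z * complex_of_real x)) (at (complex_of_real x))"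
      using z0 by (auto intro!: derivative_eq_intros)
    from has_vector_derivative_real_field[OF this] show ?thesis .
  qed
  have "(LBINT x=0..\<infinity>. exp (z * complex_of_real x)) = 0 - 1 / z"
    using z0 int lim der
    by (intro interval_integral_FTC_integrable[where F="\<lambda>x. exp (z * complex_of_real x) / z"])
       (auto intro!: tendsto_eq_intros continuous_intros
          simp: ereal_tendsto_simps zero_ereal_def)
  then have "(\<integral>k. indicator {0<..} k *\<^sub>R exp (z * complex_of_real k) \<partial>lborel) = - 1 / z"
    by (simp add: interval_lebesgue_integral_def set_lebesgue_integral_def zero_ereal_def)
  moreover have "integrable lborel (\<lambda>k. indicator {0<..} k *\<^sub>R exp (z * complex_of_real k))"
    using int by (simp add: set_integrable_def zero_ereal_def)
  ultimately show ?thesis by (simp add: has_bochner_integral_iff)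
qed

lemma exp_re_im: "exp (complex_of_real a + \<i> * complex_of_real b) = complex_of_real (exp a) * cis b"
  by (simp add: exp_add cis_conv_exp exp_of_real)

lemma has_bochner_integral_reflect:
  fixes f :: "real \<Rightarrow> complex"
  assumes "has_bochner_integral lborel f I"
  shows "has_bochner_integral lborel (\<lambda>x. f (- x)) I"
proof -
  have i: "integrable lborel f" and e: "integral\<^sup>L lborel f = I" using assms by (auto simp: has_bochner_integral_iff)
  have "integrable lborel (\<lambda>x. f (0 + (-1) * x))" using i by (subst lborel_integrable_real_affine_iff) auto
  moreover have "integral\<^sup>L lborel f = \<bar>-1\<bar> *\<^sub>R (\<integral>x. f (0 + (-1) * x) \<partial>lborel)"
    by (rule lborel_integral_real_affine) simp
  ultimately show ?thesis using e by (simp add: has_bochner_integral_iff)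
qed

definition Lor :: "real \<Rightarrow> real \<Rightarrow> real" where
  "Lor d t = 2 * d / (d\<^sup>2 + t\<^sup>2)"

lemma exp_ft:
  assumes d: "d > 0"
  shows "has_bochner_integral lborel (\<lambda>k. complex_of_real (exp (- d * \<bar>k\<bar>)) * cis (k * t))
           (complex_of_real (Lor d t))"
proof -
  define z1 where "z1 = complex_of_real (-d) + \<i> * complex_of_real t"
  define z2 where "z2 = complex_of_real d + \<i> * complex_of_real t"
  have h1: "has_bochner_integral lborel (\<lambda>k. indicator {0<..} k *\<^sub>R exp (z1 * complex_of_real k)) (- 1 / z1)"
    using d by (intro exp_half) (simp add: z1_def)
  have h2': "has_bochner_integral lborel (\<lambda>k. indicator {0<..} k *\<^sub>R exp ((- z2) * complex_of_real k)) (- 1 / (- z2))"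
    using d by (intro exp_half) (simp add: z2_def)
  have h2: "has_bochner_integral lborel (\<lambda>k. indicator {..<0} k *\<^sub>R exp (z2 * complex_of_real k)) (1 / z2)"
    using has_bochner_integral_reflect[OF h2'] by (simp add: indicator_def)
  have h: "has_bochner_integral lborel (\<lambda>k. indicator {0<..} k *\<^sub>R exp (z1 * complex_of_real k) +
      indicator {..<0} k *\<^sub>R exp (z2 * complex_of_real k)) (- 1 / z1 + 1 / z2)"
    by (rule has_bochner_integral_add[OF h1 h2])
  have val: "- 1 / z1 + 1 / z2 = complex_of_real (Lor d t)"
  proof -
    have n1: "z1 \<noteq> 0" "z2 \<noteq> 0" using d by (auto simp: z1_def z2_def complex_eq_iff)
    have e1: "z1 * z2 = complex_of_real (- (d\<^sup>2 + t\<^sup>2))"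
      by (simp add: z1_def z2_def complex_eq_iff power2_eq_square)
    have e2: "z1 - z2 = complex_of_real (- (2 * d))" by (simp add: z1_def z2_def)
    have "- 1 / z1 + 1 / z2 = (z1 - z2) / (z1 * z2)" using n1 by (simp add: field_simps)
    also have "\<dots> = complex_of_real (- (2 * d)) / complex_of_real (- (d\<^sup>2 + t\<^sup>2))" by (simp only: e1 e2)
    also have "\<dots> = complex_of_real (- (2 * d) / (- (d\<^sup>2 + t\<^sup>2)))" by (simp only: of_real_divide)
    also have "\<dots> = complex_of_real (Lor d t)" by (simp only: Lor_def minus_divide_divide)
    finally show ?thesis .
  qed
  have "AE k in lborel. indicator {0<..} k *\<^sub>R exp (z1 * complex_of_real k) +
      indicator {..<0} k *\<^sub>R exp (z2 * complex_of_real k) = complex_of_real (exp (- d * \<bar>k\<bar>)) * cis (k * t)"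
    using AE_lborel_singleton[of 0]
  proof eventually_elim
    case (elim k)
    show ?case
    proof (cases "k > 0")
      case True
      have "z1 * complex_of_real k = complex_of_real (- d * \<bar>k\<bar>) + \<i> * complex_of_real (k * t)"
        using True by (simp add: z1_def algebra_simps)
      then have "exp (z1 * complex_of_real k) = complex_of_real (exp (- d * \<bar>k\<bar>)) * cis (k * t)"
        by (simp only: exp_re_im)
      then show ?thesis using True by (simp add: indicator_def)
    next
      case False
      then have "k < 0" using elim by auto
      have "z2 * complex_of_real k = complex_of_real (- d * \<bar>k\<bar>) + \<i> * complex_of_real (k * t)"
        using \<open>k < 0\<close> by (simp add: z2_def algebra_simps)
      then have "exp (z2 * complex_of_real k) = complex_of_real (exp (- d * \<bar>k\<bar>)) * cis (k * t)"
        by (simp only: exp_re_im)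
      then show ?thesis using \<open>k < 0\<close> by (simp add: indicator_def)
    qed
  qed
  then have "has_bochner_integral lborel (\<lambda>k. indicator {0<..} k *\<^sub>R exp (z1 * complex_of_real k) +
      indicator {..<0} k *\<^sub>R exp (z2 * complex_of_real k)) (- 1 / z1 + 1 / z2) =
    has_bochner_integral lborel (\<lambda>k. complex_of_real (exp (- d * \<bar>k\<bar>)) * cis (k * t)) (- 1 / z1 + 1 / z2)"
    by (intro has_bochner_integral_cong_AE) auto
  with h val show ?thesis by simp
qed


lemma Lor_nonneg: "d > 0 \<Longrightarrow> 0 \<le> Lor d t"
  by (simp add: Lor_def)

lemma Lor_sym: "Lor d (- t) = Lor d t"
  by (simp add: Lor_def)

lemma Lor_cont: "d > 0 \<Longrightarrow> continuous_on UNIV (Lor d)"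
  unfolding Lor_def by (intro continuous_intros) (auto simp: add_pos_nonneg)

lemma Lor_meas[measurable]: "d > 0 \<Longrightarrow> Lor d \<in> borel_measurable borel"
  using Lor_cont by (rule borel_measurable_continuous_onI)

lemma inv1p_integrable: "integrable lborel (\<lambda>x::real. inverse (1 + x\<^sup>2))"
  and inv1p_integral: "(\<integral>x. inverse (1 + x\<^sup>2) \<partial>lborel) = pi"
proof -
  have e: "einterval (-\<infinity>) \<infinity> = (UNIV :: real set)" by (auto simp: einterval_def)
  show "integrable lborel (\<lambda>x::real. inverse (1 + x\<^sup>2))"
    using integrable_inverse_1_plus_square by (simp add: e set_integrable_def)
  show "(\<integral>x. inverse (1 + x\<^sup>2) \<partial>lborel) = pi"
    using LBINT_inverse_1_plus_square
    by (simp add: e interval_lebesgue_integral_def set_lebesgue_integral_def)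
qed

lemma Lor_integral:
  assumes d: "d > 0"
  shows "has_bochner_integral lborel (Lor d) (2 * pi)"
proof -
  define f where "f x = (2 / d) * inverse (1 + (x / d)\<^sup>2)" for x
  have fL: "Lor d x = f x" for x
    using d by (simp add: Lor_def f_def field_simps power2_eq_square)
  have ff: "f (0 + d * x) = (2 / d) * inverse (1 + x\<^sup>2)" for x using d by (simp add: f_def)
  have i1: "integrable lborel (\<lambda>x. f (0 + d * x))"
    unfolding ff using inv1p_integrable by simp
  then have i: "integrable lborel f"
    using lborel_integrable_real_affine_iff[of d f 0] d by simp
  have "integral\<^sup>L lborel f = \<bar>d\<bar> *\<^sub>R (\<integral>x. f (0 + d * x) \<partial>lborel)"
    using d by (intro lborel_integral_real_affine) simp
  also have "\<dots> = 2 * pi" unfolding ff using d by (simp add: inv1p_integral)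
  finally show ?thesis using i fL by (simp add: has_bochner_integral_iff fun_eq_iff[symmetric] fL[abs_def])
qed

lemma Lor_nn_integral:
  assumes d: "d > 0"
  shows "(\<integral>\<^sup>+y. ennreal (Lor d (x - y)) \<partial>lborel) = ennreal (2 * pi)"
proof -
  have "(\<integral>\<^sup>+y. ennreal (Lor d y) \<partial>lborel) = ennreal (2 * pi)"
    using Lor_integral[OF d] Lor_nonneg[OF d]
    by (subst nn_integral_eq_integral) (auto simp: has_bochner_integral_iff)
  moreover have "(\<integral>\<^sup>+y. ennreal (Lor d y) \<partial>lborel) = (\<integral>\<^sup>+y. ennreal (Lor d (x - y)) \<partial>lborel)"
    using nn_integral_real_affine[of "\<lambda>y. ennreal (Lor d y)" "-1" x] d by simp
  ultimately show ?thesis by simp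
qed

lemma swap_integral:
  fixes g h :: "real \<Rightarrow> complex" and K :: "real \<Rightarrow> real \<Rightarrow> complex"
  assumes g: "integrable lborel g" and h: "integrable lborel h"
    and K: "case_prod K \<in> borel_measurable (lborel \<Otimes>\<^sub>M lborel)" and Kb: "\<And>k x. cmod (K k x) \<le> 1"
  shows "(\<integral>k. h k * (\<integral>x. g x * K k x \<partial>lborel) \<partial>lborel) = (\<integral>x. g x * (\<integral>k. h k * K k x \<partial>lborel) \<partial>lborel)"
proof -
  have gm: "g \<in> borel_measurable lborel" and hm: "h \<in> borel_measurable lborel" using g h by auto
  have Kk: "(\<lambda>y. K k y) \<in> borel_measurable lborel" for k
    using measurable_Pair2[OF K, of k] by simp
  have meas: "(\<lambda>(k, x). h k * (g x * K k x)) \<in> borel_measurable (lborel \<Otimes>\<^sub>M lborel)"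
    using gm hm K by measurable
  have int: "integrable (lborel \<Otimes>\<^sub>M lborel) (\<lambda>(k, x). h k * (g x * K k x))"
  proof (rule lborel_pair.Fubini_integrable[OF meas])
    have "integrable lborel (\<lambda>k. norm (h k) * (\<integral>x. norm (g x) \<partial>lborel))"
      using h by auto
    then show "integrable lborel (\<lambda>k. \<integral>y. norm (case (k, y) of (k, x) \<Rightarrow> h k * (g x * K k x)) \<partial>lborel)"
    proof (rule Bochner_Integration.integrable_bound)
      show "(\<lambda>k. \<integral>y. norm (case (k, y) of (k, x) \<Rightarrow> h k * (g x * K k x)) \<partial>lborel) \<in> borel_measurable lborel"
        using meas by (intro lborel.borel_measurable_lebesgue_integral) (auto simp: split_beta')
      show "AE k in lborel. norm (\<integral>y. norm (case (k, y) of (k, x) \<Rightarrow> h k * (g x * K k x)) \<partial>lborel)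
              \<le> norm (norm (h k) * (\<integral>x. norm (g x) \<partial>lborel))"
      proof (rule AE_I2)
        fix k
        have "(\<integral>y. norm (h k * (g y * K k y)) \<partial>lborel) \<le> (\<integral>y. norm (h k) * norm (g y) \<partial>lborel)"
        proof (rule integral_mono)
          show "integrable lborel (\<lambda>y. norm (h k) * norm (g y))" using g by auto
          show "integrable lborel (\<lambda>y. norm (h k * (g y * K k y)))"
          proof (rule Bochner_Integration.integrable_bound[OF \<open>integrable lborel (\<lambda>y. norm (h k) * norm (g y))\<close>])
            show "(\<lambda>y. norm (h k * (g y * K k y))) \<in> borel_measurable lborel"
              using gm Kk[of k] by measurable
            show "AE x in lborel. norm (norm (h k * (g x * K k x))) \<le> norm (norm (h k) * norm (g x))"
              using Kb by (auto simp: norm_mult intro!: mult_left_mono mult_right_le_one_le)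
          qed
          show "norm (h k * (g y * K k y)) \<le> norm (h k) * norm (g y)" for y
            using Kb by (auto simp: norm_mult intro!: mult_left_mono mult_right_le_one_le)
        qed
        moreover have "0 \<le> (\<integral>y. norm (h k * (g y * K k y)) \<partial>lborel)" by simp
        ultimately show "norm (\<integral>y. norm (case (k, y) of (k, x) \<Rightarrow> h k * (g x * K k x)) \<partial>lborel)
              \<le> norm (norm (h k) * (\<integral>x. norm (g x) \<partial>lborel))"
          by simp
      qed
    qed
    show "AE k in lborel. integrable lborel (\<lambda>y. case (k, y) of (k, x) \<Rightarrow> h k * (g x * K k x))"
    proof (rule AE_I2)
      fix k
      show "integrable lborel (\<lambda>y. case (k, y) of (k, x) \<Rightarrow> h k * (g x * K k x))"
      proof (rule Bochner_Integration.integrable_bound)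
        show "integrable lborel (\<lambda>y. norm (h k) * norm (g y))" using g by auto
        show "(\<lambda>y. case (k, y) of (k, x) \<Rightarrow> h k * (g x * K k x)) \<in> borel_measurable lborel"
          using gm Kk[of k] by simp
        show "AE x in lborel. norm (case (k, x) of (k, x) \<Rightarrow> h k * (g x * K k x)) \<le> norm (norm (h k) * norm (g x))"
          using Kb by (auto simp: norm_mult intro!: mult_left_mono mult_right_le_one_le)
      qed
    qed
  qed
  have "(\<integral>k. h k * (\<integral>x. g x * K k x \<partial>lborel) \<partial>lborel) = (\<integral>k. (\<integral>x. h k * (g x * K k x) \<partial>lborel) \<partial>lborel)"
    by simp
  also have "\<dots> = (\<integral>x. (\<integral>k. h k * (g x * K k x) \<partial>lborel) \<partial>lborel)"
    using lborel_pair.Fubini_integral[of "\<lambda>k x. h k * (g x * K k x)"] int by simp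
  also have "\<dots> = (\<integral>x. g x * (\<integral>k. h k * K k x \<partial>lborel) \<partial>lborel)"
    by (simp add: algebra_simps integral_mult_left_zero[symmetric] del: integral_mult_left_zero)
  finally show ?thesis .
qed


definition FT :: "(real \<Rightarrow> complex) \<Rightarrow> real \<Rightarrow> complex" where
  "FT g k = (\<integral>x. g x * cis (- (k * x)) \<partial>lborel)"

lemma FT_meas[measurable]: "g \<in> borel_measurable borel \<Longrightarrow> FT g \<in> borel_measurable borel"
  unfolding FT_def by (intro lborel.borel_measurable_lebesgue_integral) (simp add: split_beta')

lemma norm_integral_le_nn: "ennreal (norm (\<integral>x. f x \<partial>M)) \<le> (\<integral>\<^sup>+x. norm (f x) \<partial>M)"
  for f :: "'a \<Rightarrow> complex"
proof (cases "integrable M f")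
  case True then show ?thesis by (rule integral_norm_bound_ennreal)
next
  case False then show ?thesis by (simp add: not_integrable_integral_eq)
qed

lemma FT_bound: "cmod (FT g k) \<le> (\<integral>x. cmod (g x) \<partial>lborel)" if "integrable lborel g"
proof -
  have "cmod (FT g k) \<le> (\<integral>x. norm (g x * cis (- (k * x))) \<partial>lborel)"
    unfolding FT_def by (rule integral_norm_bound)
  then show ?thesis by (simp add: norm_mult)
qed

lemma exp_integrable: "(d::real) > 0 \<Longrightarrow> integrable lborel (\<lambda>k. exp (- d * \<bar>k\<bar>))"
proof -
  assume d: "d > 0"
  have "integrable lborel (\<lambda>k. complex_of_real (exp (- d * \<bar>k\<bar>)) * cis (k * 0))"
    using exp_ft[OF d, of 0] by (auto simp: has_bochner_integral_iff)
  then show ?thesis by (simp add: complex_of_real_integrable_eq)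
qed

lemma exp_cis_integrable: "(d::real) > 0 \<Longrightarrow> integrable lborel (\<lambda>k. complex_of_real (exp (- d * \<bar>k\<bar>)) * cis (k * (t::real)))"
  using exp_ft by (auto simp: has_bochner_integral_iff)

lemma core_identity:
  fixes g :: "real \<Rightarrow> complex"
  assumes g: "integrable lborel g" and d: "d > 0"
  shows "(\<integral>k. complex_of_real (exp (- d * \<bar>k\<bar>)) * FT g k * cnj (FT g k) \<partial>lborel) =
         (\<integral>y. cnj (g y) * (\<integral>x. g x * complex_of_real (Lor d (y - x)) \<partial>lborel) \<partial>lborel)"
proof -
  define D where "D k = complex_of_real (exp (- d * \<bar>k\<bar>))" for k
  have gm[measurable]: "g \<in> borel_measurable borel" using g by auto
  obtain M where M: "\<And>k. cmod (FT g k) \<le> M" using FT_bound[OF g] by blast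
  have DG: "integrable lborel (\<lambda>k. D k * FT g k)"
  proof (rule Bochner_Integration.integrable_bound)
    show "integrable lborel (\<lambda>k. exp (- d * \<bar>k\<bar>) * M)" using exp_integrable[OF d] by simp
    show "(\<lambda>k. D k * FT g k) \<in> borel_measurable lborel" unfolding D_def by measurable
    show "AE k in lborel. norm (D k * FT g k) \<le> norm (exp (- d * \<bar>k\<bar>) * M)"
    proof (rule AE_I2)
      fix k
      have "norm (D k * FT g k) \<le> exp (- d * \<bar>k\<bar>) * M"
        unfolding D_def norm_mult using M[of k] by (simp add: mult_left_mono)
      also have "\<dots> \<le> norm (exp (- d * \<bar>k\<bar>) * M)" by simp
      finally show "norm (D k * FT g k) \<le> norm (exp (- d * \<bar>k\<bar>) * M)" .
    qed
  qed
  have cnjFT: "cnj (FT g k) = (\<integral>y. cnj (g y) * cis (k * y) \<partial>lborel)" for k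
    unfolding FT_def by (subst Bochner_Integration.integral_cnj[symmetric]) (simp add: cis_cnj)
  have "(\<integral>k. D k * FT g k * cnj (FT g k) \<partial>lborel)
      = (\<integral>k. (D k * FT g k) * (\<integral>y. cnj (g y) * cis (k * y) \<partial>lborel) \<partial>lborel)"
    by (simp add: cnjFT)
  also have "\<dots> = (\<integral>y. cnj (g y) * (\<integral>k. (D k * FT g k) * cis (k * y) \<partial>lborel) \<partial>lborel)"
    by (rule swap_integral) (use g DG in auto)
  also have "\<dots> = (\<integral>y. cnj (g y) * (\<integral>x. g x * complex_of_real (Lor d (y - x)) \<partial>lborel) \<partial>lborel)"
  proof (rule Bochner_Integration.integral_cong[OF refl])
    fix y
    have "(\<integral>k. (D k * FT g k) * cis (k * y) \<partial>lborel) =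
          (\<integral>k. (D k * cis (k * y)) * (\<integral>x. g x * cis (- (k * x)) \<partial>lborel) \<partial>lborel)"
      unfolding FT_def by (simp add: ac_simps)
    also have "\<dots> = (\<integral>x. g x * (\<integral>k. (D k * cis (k * y)) * cis (- (k * x)) \<partial>lborel) \<partial>lborel)"
      by (rule swap_integral) (use g exp_cis_integrable[OF d] in \<open>auto simp: D_def\<close>)
    also have "\<dots> = (\<integral>x. g x * complex_of_real (Lor d (y - x)) \<partial>lborel)"
    proof (rule Bochner_Integration.integral_cong[OF refl])
      fix x
      have "(\<integral>k. (D k * cis (k * y)) * cis (- (k * x)) \<partial>lborel) =
            (\<integral>k. complex_of_real (exp (- d * \<bar>k\<bar>)) * cis (k * (y - x)) \<partial>lborel)"
        by (intro Bochner_Integration.integral_cong refl) (simp add: D_def mult.assoc cis_mult right_diff_distrib)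
      also have "\<dots> = complex_of_real (Lor d (y - x))"
        using exp_ft[OF d, of "y - x"] by (simp add: has_bochner_integral_iff)
      finally show "g x * (\<integral>k. (D k * cis (k * y)) * cis (- (k * x)) \<partial>lborel) = g x * complex_of_real (Lor d (y - x))"
        by simp
    qed
    finally show "cnj (g y) * (\<integral>k. (D k * FT g k) * cis (k * y) \<partial>lborel) =
        cnj (g y) * (\<integral>x. g x * complex_of_real (Lor d (y - x)) \<partial>lborel)" by simp
  qed
  finally show ?thesis unfolding D_def .
qed


lemma core_damped:
  fixes g :: "real \<Rightarrow> complex"
  assumes g: "integrable lborel g" and d: "d > 0"
  shows "(\<integral>\<^sup>+k. ennreal (exp (- d * \<bar>k\<bar>) * (cmod (FT g k))\<^sup>2) \<partial>lborel) \<le> ennreal (2 * pi) * nn2 g"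
proof -
  have gm[measurable]: "g \<in> borel_measurable borel" using g by auto
  obtain M where M: "\<And>k. cmod (FT g k) \<le> M" using FT_bound[OF g] by blast
  have M0: "0 \<le> M" using M[of 0] norm_ge_zero order_trans by blast
  define f where "f k = exp (- d * \<bar>k\<bar>) * (cmod (FT g k))\<^sup>2" for k
  have fm[measurable]: "f \<in> borel_measurable borel" unfolding f_def by measurable
  have fint: "integrable lborel f"
  proof (rule Bochner_Integration.integrable_bound)
    show "integrable lborel (\<lambda>k. exp (- d * \<bar>k\<bar>) * M\<^sup>2)" using exp_integrable[OF d] by simp
    show "f \<in> borel_measurable lborel" by simp
    show "AE k in lborel. norm (f k) \<le> norm (exp (- d * \<bar>k\<bar>) * M\<^sup>2)"
      using M M0 by (auto simp: f_def intro!: mult_left_mono power_mono)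
  qed
  have f0: "0 \<le> f k" for k by (simp add: f_def)
  have "(\<integral>\<^sup>+k. ennreal (f k) \<partial>lborel) = ennreal (\<integral>k. f k \<partial>lborel)"
    using fint f0 by (intro nn_integral_eq_integral) auto
  also have "(\<integral>k. f k \<partial>lborel) = norm (\<integral>k. complex_of_real (exp (- d * \<bar>k\<bar>)) * FT g k * cnj (FT g k) \<partial>lborel)"
  proof -
    have "(\<lambda>k. complex_of_real (exp (- d * \<bar>k\<bar>)) * FT g k * cnj (FT g k)) = (\<lambda>k. complex_of_real (f k))"
      by (auto simp: f_def mult.assoc complex_norm_square[symmetric])
    then show ?thesis using f0 by (simp add: integral_nonneg)
  qed
  also have "\<dots> = norm (\<integral>y. cnj (g y) * (\<integral>x. g x * complex_of_real (Lor d (y - x)) \<partial>lborel) \<partial>lborel)"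
    by (simp only: core_identity[OF g d])
  finally have step1: "(\<integral>\<^sup>+k. ennreal (f k) \<partial>lborel) =
      ennreal (norm (\<integral>y. cnj (g y) * (\<integral>x. g x * complex_of_real (Lor d (y - x)) \<partial>lborel) \<partial>lborel))" .
  also have "\<dots> \<le> (\<integral>\<^sup>+y. norm (cnj (g y) * (\<integral>x. g x * complex_of_real (Lor d (y - x)) \<partial>lborel)) \<partial>lborel)"
    by (rule norm_integral_le_nn)
  also have "\<dots> \<le> (\<integral>\<^sup>+y. ennreal (cmod (g y)) * (\<integral>\<^sup>+x. ennreal (cmod (g x) * Lor d (y - x)) \<partial>lborel) \<partial>lborel)"
  proof (rule nn_integral_mono)
    fix y
    have "ennreal (norm (\<integral>x. g x * complex_of_real (Lor d (y - x)) \<partial>lborel))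
          \<le> (\<integral>\<^sup>+x. norm (g x * complex_of_real (Lor d (y - x))) \<partial>lborel)"
      by (rule norm_integral_le_nn)
    also have "\<dots> = (\<integral>\<^sup>+x. ennreal (cmod (g x) * Lor d (y - x)) \<partial>lborel)"
      using Lor_nonneg[OF d] by (intro nn_integral_cong) (simp add: norm_mult)
    finally have *: "ennreal (norm (\<integral>x. g x * complex_of_real (Lor d (y - x)) \<partial>lborel))
          \<le> (\<integral>\<^sup>+x. ennreal (cmod (g x) * Lor d (y - x)) \<partial>lborel)" .
    show "ennreal (norm (cnj (g y) * (\<integral>x. g x * complex_of_real (Lor d (y - x)) \<partial>lborel)))
          \<le> ennreal (cmod (g y)) * (\<integral>\<^sup>+x. ennreal (cmod (g x) * Lor d (y - x)) \<partial>lborel)"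
      using mult_left_mono[OF *, of "ennreal (cmod (g y))"] by (simp add: norm_mult ennreal_mult')
  qed
  also have "\<dots> = (\<integral>\<^sup>+y. (\<integral>\<^sup>+x. ennreal (cmod (g y) * (cmod (g x) * Lor d (y - x))) \<partial>lborel) \<partial>lborel)"
    using d by (subst nn_integral_cmult[symmetric]) (auto simp: ennreal_mult'[symmetric] intro!: nn_integral_cong)
  also have "\<dots> \<le> (\<integral>\<^sup>+y. (\<integral>\<^sup>+x. ennreal ((cmod (g y))\<^sup>2 / 2 * Lor d (y - x)) +
                                     ennreal ((cmod (g x))\<^sup>2 / 2 * Lor d (y - x)) \<partial>lborel) \<partial>lborel)"
  proof (intro nn_integral_mono)
    fix x y
    have "cmod (g y) * cmod (g x) \<le> ((cmod (g y))\<^sup>2 + (cmod (g x))\<^sup>2) / 2"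
      using amgm_cmod[of "g y" "g x"] by (simp add: norm_mult)
    from mult_right_mono[OF this Lor_nonneg[OF d, of "y - x"]]
    have "cmod (g y) * (cmod (g x) * Lor d (y - x)) \<le> (cmod (g y))\<^sup>2 / 2 * Lor d (y - x) + (cmod (g x))\<^sup>2 / 2 * Lor d (y - x)"
      by (simp add: field_simps)
    then show "ennreal (cmod (g y) * (cmod (g x) * Lor d (y - x)))
        \<le> ennreal ((cmod (g y))\<^sup>2 / 2 * Lor d (y - x)) + ennreal ((cmod (g x))\<^sup>2 / 2 * Lor d (y - x))"
      using Lor_nonneg[OF d, of "y - x"] by (simp add: ennreal_plus[symmetric] del: ennreal_plus)
  qed
  also have "\<dots> = (\<integral>\<^sup>+y. (\<integral>\<^sup>+x. ennreal ((cmod (g y))\<^sup>2 / 2 * Lor d (y - x)) \<partial>lborel) \<partial>lborel) +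
                  (\<integral>\<^sup>+y. (\<integral>\<^sup>+x. ennreal ((cmod (g x))\<^sup>2 / 2 * Lor d (y - x)) \<partial>lborel) \<partial>lborel)"
    using d by (simp add: nn_integral_add)
  also have "(\<integral>\<^sup>+y. (\<integral>\<^sup>+x. ennreal ((cmod (g y))\<^sup>2 / 2 * Lor d (y - x)) \<partial>lborel) \<partial>lborel) = ennreal pi * nn2 g"
  proof -
    have "(\<integral>\<^sup>+y. (\<integral>\<^sup>+x. ennreal ((cmod (g y))\<^sup>2 / 2 * Lor d (y - x)) \<partial>lborel) \<partial>lborel)
        = (\<integral>\<^sup>+y. ennreal ((cmod (g y))\<^sup>2 / 2) * (\<integral>\<^sup>+x. ennreal (Lor d (y - x)) \<partial>lborel) \<partial>lborel)"
      using d by (subst nn_integral_cmult[symmetric]) (auto simp: ennreal_mult'[symmetric] intro!: nn_integral_cong)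
    also have "\<dots> = (\<integral>\<^sup>+y. ennreal pi * ennreal ((cmod (g y))\<^sup>2) \<partial>lborel)"
      using d by (intro nn_integral_cong) (simp add: Lor_nn_integral ennreal_mult'[symmetric])
    also have "\<dots> = ennreal pi * nn2 g" unfolding nn2_def by (simp add: nn_integral_cmult)
    finally show ?thesis .
  qed
  also have "(\<integral>\<^sup>+y. (\<integral>\<^sup>+x. ennreal ((cmod (g x))\<^sup>2 / 2 * Lor d (y - x)) \<partial>lborel) \<partial>lborel) = ennreal pi * nn2 g"
  proof -
    have "(\<integral>\<^sup>+y. (\<integral>\<^sup>+x. ennreal ((cmod (g x))\<^sup>2 / 2 * Lor d (y - x)) \<partial>lborel) \<partial>lborel)
        = (\<integral>\<^sup>+x. (\<integral>\<^sup>+y. ennreal ((cmod (g x))\<^sup>2 / 2 * Lor d (y - x)) \<partial>lborel) \<partial>lborel)"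
      using d by (intro lborel_pair.Fubini') simp
    also have "\<dots> = (\<integral>\<^sup>+x. ennreal ((cmod (g x))\<^sup>2 / 2) * (\<integral>\<^sup>+y. ennreal (Lor d (x - y)) \<partial>lborel) \<partial>lborel)"
    proof (intro nn_integral_cong)
      fix x
      have "(\<integral>\<^sup>+y. ennreal ((cmod (g x))\<^sup>2 / 2 * Lor d (y - x)) \<partial>lborel)
          = (\<integral>\<^sup>+y. ennreal ((cmod (g x))\<^sup>2 / 2) * ennreal (Lor d (x - y)) \<partial>lborel)"
        by (intro nn_integral_cong) (simp add: ennreal_mult'[symmetric] Lor_def power2_commute)
      also have "\<dots> = ennreal ((cmod (g x))\<^sup>2 / 2) * (\<integral>\<^sup>+y. ennreal (Lor d (x - y)) \<partial>lborel)"
        using d by (simp add: nn_integral_cmult)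
      finally show "(\<integral>\<^sup>+y. ennreal ((cmod (g x))\<^sup>2 / 2 * Lor d (y - x)) \<partial>lborel)
          = ennreal ((cmod (g x))\<^sup>2 / 2) * (\<integral>\<^sup>+y. ennreal (Lor d (x - y)) \<partial>lborel)" .
    qed
    also have "\<dots> = (\<integral>\<^sup>+x. ennreal pi * ennreal ((cmod (g x))\<^sup>2) \<partial>lborel)"
      using d by (intro nn_integral_cong) (simp add: Lor_nn_integral ennreal_mult'[symmetric])
    also have "\<dots> = ennreal pi * nn2 g" unfolding nn2_def by (simp add: nn_integral_cmult)
    finally show ?thesis .
  qed
  also have "ennreal pi * nn2 g + ennreal pi * nn2 g = ennreal (2 * pi) * nn2 g"
    by (simp add: distrib_right[symmetric] ennreal_plus[symmetric] del: ennreal_plus)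
  finally show ?thesis unfolding f_def .
qed


lemma core:
  fixes g :: "real \<Rightarrow> complex"
  assumes g: "integrable lborel g"
  shows "nn2 (FT g) \<le> ennreal (2 * pi) * nn2 g"
proof -
  have gm[measurable]: "g \<in> borel_measurable borel" using g by auto
  define u where "u n k = ennreal (exp (- inverse (real (Suc n)) * \<bar>k\<bar>) * (cmod (FT g k))\<^sup>2)" for n k
  have um: "u n \<in> borel_measurable lborel" for n unfolding u_def by measurable
  have lim: "liminf (\<lambda>n. u n k) = ennreal ((cmod (FT g k))\<^sup>2)" for k
  proof (rule lim_imp_Liminf)
    have "(\<lambda>n. exp (- inverse (real (Suc n)) * \<bar>k\<bar>) * (cmod (FT g k))\<^sup>2) \<longlonglongrightarrow> exp (- 0 * \<bar>k\<bar>) * (cmod (FT g k))\<^sup>2"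
      by (intro tendsto_intros LIMSEQ_inverse_real_of_nat)
    then show "(\<lambda>n. u n k) \<longlonglongrightarrow> ennreal ((cmod (FT g k))\<^sup>2)"
      unfolding u_def by (intro tendsto_ennrealI) simp
  qed simp
  have "nn2 (FT g) = (\<integral>\<^sup>+k. liminf (\<lambda>n. u n k) \<partial>lborel)"
    unfolding nn2_def lim ..
  also have "\<dots> \<le> liminf (\<lambda>n. integral\<^sup>N lborel (u n))"
    by (rule nn_integral_liminf[OF um])
  also have "\<dots> \<le> liminf (\<lambda>n. ennreal (2 * pi) * nn2 g)"
  proof (intro Liminf_mono always_eventually allI)
    fix n
    show "integral\<^sup>N lborel (u n) \<le> ennreal (2 * pi) * nn2 g"
      unfolding u_def by (rule core_damped[OF g]) simp
  qed
  also have "\<dots> = ennreal (2 * pi) * nn2 g" by (simp add: Liminf_const)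
  finally show ?thesis .
qed

definition iFT :: "(real \<Rightarrow> complex) \<Rightarrow> real \<Rightarrow> complex" where
  "iFT g x = (\<integral>k. g k * cis (k * x) \<partial>lborel)"

lemma iFT_FT: "iFT g x = cnj (FT (\<lambda>k. cnj (g k)) x)"
  unfolding iFT_def FT_def
  by (subst Bochner_Integration.integral_cnj[symmetric]) (simp add: cis_cnj mult.commute)

lemma core_inv:
  fixes g :: "real \<Rightarrow> complex"
  assumes g: "integrable lborel g"
  shows "nn2 (iFT g) \<le> ennreal (2 * pi) * nn2 g"
proof -
  have "nn2 (iFT g) = nn2 (FT (\<lambda>k. cnj (g k)))"
    unfolding nn2_def iFT_FT by simp
  also have "\<dots> \<le> ennreal (2 * pi) * nn2 (\<lambda>k. cnj (g k))"
    using g by (intro core) simp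
  also have "nn2 (\<lambda>k. cnj (g k)) = nn2 g" unfolding nn2_def by simp
  finally show ?thesis .
qed

lemma Fr_FT: "Fr u R k = FT (\<lambda>x. indicator {-R..R} x *\<^sub>R u x) k"
  unfolding Fr_def FT_def set_lebesgue_integral_def by (simp add: indicator_def)

lemma fourier_upper:
  assumes "is_fourier u g"
  shows "nn2 g \<le> ennreal (4 * pi) * nn2 u"
proof -
  have u: "L2 u" "L2 g" and e: "((\<lambda>R. nn2 (\<lambda>k. g k - Fr u R k)) \<longlongrightarrow> 0) at_top"
    using assms by (auto simp: is_fourier_Fr)
  have um[measurable]: "u \<in> borel_measurable borel" and gm[measurable]: "g \<in> borel_measurable borel"
    using u L2_meas by auto
  have bound: "nn2 g \<le> ennreal (4 * pi) * nn2 u + 2 * nn2 (\<lambda>k. g k - Fr u R k)" for R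
  proof -
    define uR where "uR x = indicator {-R..R} x *\<^sub>R u x" for x
    have uRi: "integrable lborel uR"
      using L2_set_integrable[OF u(1), of "\<lambda>_. 1" "-R" R] unfolding uR_def set_integrable_def by simp
    have FrF: "Fr u R = FT uR" unfolding uR_def by (simp add: Fr_FT fun_eq_iff)
    have Frm[measurable]: "Fr u R \<in> borel_measurable borel" unfolding FrF using uRi by measurable
    have "nn2 (Fr u R) \<le> ennreal (2 * pi) * nn2 uR" unfolding FrF by (rule core[OF uRi])
    also have "nn2 uR \<le> nn2 u" by (rule nn2_meas_le) (auto simp: uR_def indicator_def)
    finally have b1: "nn2 (Fr u R) \<le> ennreal (2 * pi) * nn2 u"
      by (simp add: mult_left_mono)
    have "nn2 g = nn2 (\<lambda>k. 1 * Fr u R k + 1 * (g k - Fr u R k))" by simp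
    also have "\<dots> \<le> ennreal (2 * (cmod 1)\<^sup>2) * nn2 (Fr u R) + ennreal (2 * (cmod (1::complex))\<^sup>2) * nn2 (\<lambda>k. g k - Fr u R k)"
      by (rule nn2_lin_bound) auto
    also have "\<dots> = 2 * nn2 (Fr u R) + 2 * nn2 (\<lambda>k. g k - Fr u R k)" by simp
    also have "\<dots> \<le> 2 * (ennreal (2 * pi) * nn2 u) + 2 * nn2 (\<lambda>k. g k - Fr u R k)"
      using b1 by (intro add_mono mult_left_mono) auto
    also have "2 * (ennreal (2 * pi) * nn2 u) = ennreal (4 * pi) * nn2 u"
    proof -
      have "(2::ennreal) * ennreal (2 * pi) = ennreal (4 * pi)"
        by (simp add: ennreal_mult'[symmetric] ennreal_numeral[symmetric] del: ennreal_numeral)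
      then show ?thesis by (simp add: mult.assoc[symmetric])
    qed
    finally show ?thesis .
  qed
  have "((\<lambda>R. ennreal (4 * pi) * nn2 u + 2 * nn2 (\<lambda>k. g k - Fr u R k)) \<longlongrightarrow> ennreal (4 * pi) * nn2 u + 2 * 0) at_top"
    by (intro tendsto_add tendsto_const ennreal_tendsto_cmult e) auto
  then show ?thesis
    by (intro tendsto_le[OF trivial_limit_at_top_linorder _ tendsto_const]) (auto intro: bound always_eventually)
qed


lemma ennreal_sq_tendsto0:
  fixes X Y :: "nat \<Rightarrow> ennreal"
  assumes "\<And>n. (X n)\<^sup>2 \<le> Y n" "Y \<longlonglongrightarrow> 0"
  shows "X \<longlonglongrightarrow> 0"
proof (rule order_tendstoI)
  fix a :: ennreal assume "a < 0" then show "eventually (\<lambda>n. a < X n) sequentially" by simp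
next
  fix a :: ennreal assume a: "0 < a"
  then have "0 < a\<^sup>2" by (simp add: ennreal_zero_less_mult_iff power2_eq_square)
  with assms(2) have "eventually (\<lambda>n. Y n < a\<^sup>2) sequentially"
    by (rule order_tendstoD)
  then show "eventually (\<lambda>n. X n < a) sequentially"
  proof eventually_elim
    case (elim n)
    then have "(X n)\<^sup>2 < a\<^sup>2" using assms(1)[of n] by (rule le_less_trans[rotated])
    show "X n < a"
    proof (rule ccontr)
      assume "\<not> X n < a"
      then have "a \<le> X n" by simp
      then have "a\<^sup>2 \<le> (X n)\<^sup>2" by (rule power_mono) simp
      with \<open>(X n)\<^sup>2 < a\<^sup>2\<close> show False by simp
    qed
  qed
qed

lemma L2_inner_lim:
  fixes g \<phi> :: "real \<Rightarrow> complex" and F :: "nat \<Rightarrow> real \<Rightarrow> complex"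
  assumes e: "(\<lambda>n. nn2 (\<lambda>k. g k - F n k)) \<longlonglongrightarrow> 0"
    and \<phi>: "L2 \<phi>" and gm: "g \<in> borel_measurable borel" and Fm: "\<And>n. F n \<in> borel_measurable borel"
    and iF: "\<And>n. integrable lborel (\<lambda>k. F n k * \<phi> k)" and ig: "integrable lborel (\<lambda>k. g k * \<phi> k)"
  shows "(\<lambda>n. \<integral>k. F n k * \<phi> k \<partial>lborel) \<longlonglongrightarrow> (\<integral>k. g k * \<phi> k \<partial>lborel)"
proof -
  have \<phi>m: "\<phi> \<in> borel_measurable borel" using \<phi> L2_meas by auto
  define X where "X n = (\<integral>\<^sup>+k. ennreal (cmod (g k - F n k)) * ennreal (cmod (\<phi> k)) \<partial>lborel)" for n
  have Xlim: "X \<longlonglongrightarrow> 0"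
  proof (rule ennreal_sq_tendsto0)
    fix n
    have "(X n)\<^sup>2 \<le> (\<integral>\<^sup>+k. (ennreal (cmod (g k - F n k)))^2 \<partial>lborel) * (\<integral>\<^sup>+k. (ennreal (cmod (\<phi> k)))^2 \<partial>lborel)"
      unfolding X_def using gm Fm \<phi>m by (intro Cauchy_Schwarz_nn_integral) auto
    also have "\<dots> = nn2 (\<lambda>k. g k - F n k) * nn2 \<phi>"
      unfolding nn2_def by (simp add: ennreal_power)
    finally show "(X n)\<^sup>2 \<le> nn2 (\<lambda>k. g k - F n k) * nn2 \<phi>" .
  next
    have "(\<lambda>n. nn2 \<phi> * nn2 (\<lambda>k. g k - F n k)) \<longlonglongrightarrow> nn2 \<phi> * 0"
      using L2_nn2[OF \<phi>] by (intro ennreal_tendsto_cmult e) simp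
    then show "(\<lambda>n. nn2 (\<lambda>k. g k - F n k) * nn2 \<phi>) \<longlonglongrightarrow> 0" by (simp add: mult.commute)
  qed
  have le: "ennreal (norm ((\<integral>k. F n k * \<phi> k \<partial>lborel) - (\<integral>k. g k * \<phi> k \<partial>lborel))) \<le> X n" for n
  proof -
    have "(\<integral>k. F n k * \<phi> k \<partial>lborel) - (\<integral>k. g k * \<phi> k \<partial>lborel) = (\<integral>k. (F n k - g k) * \<phi> k \<partial>lborel)"
      using iF ig by (simp add: left_diff_distrib)
    then have "ennreal (norm ((\<integral>k. F n k * \<phi> k \<partial>lborel) - (\<integral>k. g k * \<phi> k \<partial>lborel)))
       \<le> (\<integral>\<^sup>+k. norm ((F n k - g k) * \<phi> k) \<partial>lborel)"
      using norm_integral_le_nn by metis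
    also have "\<dots> = X n" unfolding X_def
      by (intro nn_integral_cong) (simp add: norm_mult ennreal_mult' norm_minus_commute)
    finally show ?thesis .
  qed
  have "(\<lambda>n. ennreal (norm ((\<integral>k. F n k * \<phi> k \<partial>lborel) - (\<integral>k. g k * \<phi> k \<partial>lborel)))) \<longlonglongrightarrow> 0"
    by (rule tendsto_sandwich[OF always_eventually always_eventually tendsto_const Xlim]) (simp_all only: le zero_le simp_thms)
  then have "(\<lambda>n. norm ((\<integral>k. F n k * \<phi> k \<partial>lborel) - (\<integral>k. g k * \<phi> k \<partial>lborel))) \<longlonglongrightarrow> 0"
    by (simp add: ennreal_tendsto_0_iff)
  then show ?thesis by (simp add: tendsto_norm_zero_iff LIM_zero_iff)
qed

lemma zero_from_intervals:
  fixes v :: "real \<Rightarrow> complex"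
  assumes vi: "\<And>a b. set_integrable lborel {a..b} v"
    and z: "\<And>a b. a \<le> b \<Longrightarrow> (LINT x:{a..b}|lborel. v x) = 0"
  shows "AE x in lborel. v x = 0"
proof -
  have "v integrable_on cbox a b" for a b
    using set_borel_integral_eq_integral(1)[OF vi[of a b]] by simp
  then obtain N where N: "negligible N"
    and lim: "\<And>x e. \<lbrakk>x \<notin> N; 0 < e\<rbrakk> \<Longrightarrow>
               \<exists>d>0. \<forall>h. 0 < h \<and> h < d \<longrightarrow>
                         norm(integral (cbox x (x + h *\<^sub>R One)) v /\<^sub>R h ^ DIM(real) - v x) < e"
    using integrable_ccontinuous_explicit[of v] by metis
  have "v x = 0" if "x \<notin> N" for x
  proof (rule ccontr)
    assume "v x \<noteq> 0"
    then have "0 < norm (v x)" by simp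
    from lim[OF that this] obtain d where d: "d > 0"
      and dd: "\<And>h. 0 < h \<and> h < d \<longrightarrow> norm(integral (cbox x (x + h *\<^sub>R One)) v /\<^sub>R h ^ DIM(real) - v x) < norm (v x)"
      by blast
    have "integral (cbox x (x + (d/2) *\<^sub>R One)) v = 0"
    proof -
      have "integral {x..x + d/2} v = (LINT t:{x..x + d/2}|lborel. v t)"
        using set_borel_integral_eq_integral(2)[OF vi[of x "x + d/2"]] by simp
      also have "\<dots> = 0" using d by (intro z) simp
      finally show ?thesis by simp
    qed
    with dd[of "d/2"] d show False by simp
  qed
  then have "AE x in lebesgue. v x = 0"
    using N by (auto simp: eventually_ae_filter_negligible)
  then show ?thesis by (simp add: AE_completion_iff)
qed


definition Kp :: "real \<Rightarrow> real \<Rightarrow> real \<Rightarrow> real \<Rightarrow> real" where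
  "Kp e a b y = (\<integral>x. indicator {a..b} x * Lor e (x - y) \<partial>lborel)"

lemma Kp_formula:
  assumes e: "e > 0" and ab: "a \<le> b"
  shows "Kp e a b y = 2 * arctan ((b - y) / e) - 2 * arctan ((a - y) / e)"
proof -
  have "(\<integral>x. indicator {a..b} x *\<^sub>R Lor e (x - y) \<partial>lborel) =
      2 * arctan ((b - y) / e) - 2 * arctan ((a - y) / e)"
  proof (rule integral_FTC_atLeastAtMost[OF ab])
    fix x
    have "((\<lambda>x. 2 * arctan ((x - y) / e)) has_real_derivative Lor e (x - y)) (at x)"
    proof -
      have "((\<lambda>x. 2 * arctan ((x - y) / e)) has_real_derivative 2 * (inverse (1 + ((x - y) / e)\<^sup>2) * (1 / e))) (at x)"
        using e by (auto intro!: derivative_eq_intros DERIV_arctan[THEN DERIV_chain2])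
      moreover have "2 * (inverse (1 + ((x - y) / e)\<^sup>2) * (1 / e)) = Lor e (x - y)"
        using e by (simp add: Lor_def field_simps power2_eq_square)
      ultimately show ?thesis by simp
    qed
    then show "((\<lambda>x. 2 * arctan ((x - y) / e)) has_vector_derivative Lor e (x - y)) (at x within {a..b})"
      by (simp add: has_real_derivative_iff_has_vector_derivative[symmetric] has_field_derivative_at_within)
  next
    show "continuous_on {a..b} (\<lambda>x. Lor e (x - y))"
      using e unfolding Lor_def by (intro continuous_intros) (auto simp: add_pos_nonneg)
  qed
  then show ?thesis by (simp add: Kp_def)
qed

lemma Kp_cont: "e > 0 \<Longrightarrow> a \<le> b \<Longrightarrow> continuous_on UNIV (Kp e a b)"
proof -
  assume e: "e > 0" and ab: "a \<le> b"
  have "Kp e a b = (\<lambda>y. 2 * arctan ((b - y) / e) - 2 * arctan ((a - y) / e))"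
    using Kp_formula[OF e ab] by (simp add: fun_eq_iff)
  then show ?thesis using e by (auto intro!: continuous_intros)
qed

lemma Kp_meas: "e > 0 \<Longrightarrow> a \<le> b \<Longrightarrow> Kp e a b \<in> borel_measurable borel"
  by (rule borel_measurable_continuous_onI[OF Kp_cont])

lemma Kp_nonneg: "e > 0 \<Longrightarrow> 0 \<le> Kp e a b y"
  unfolding Kp_def by (intro integral_nonneg_AE) (auto simp: Lor_nonneg)

lemma Kp_le: "e > 0 \<Longrightarrow> a \<le> b \<Longrightarrow> Kp e a b y \<le> 2 * pi"
  using arctan_bounded[of "(b - y) / e"] arctan_bounded[of "(a - y) / e"]
  by (simp add: Kp_formula)

lemma arctan_scaled_lim:
  shows "z > 0 \<Longrightarrow> (\<lambda>n. arctan (z * real (Suc n))) \<longlonglongrightarrow> pi / 2"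
    and "z < 0 \<Longrightarrow> (\<lambda>n. arctan (z * real (Suc n))) \<longlonglongrightarrow> - (pi / 2)"
proof -
  have S: "filterlim (\<lambda>n. real (Suc n)) at_top sequentially"
    by (rule filterlim_compose[OF filterlim_real_sequentially filterlim_Suc])
  show "z > 0 \<Longrightarrow> (\<lambda>n. arctan (z * real (Suc n))) \<longlonglongrightarrow> pi / 2"
    by (rule filterlim_compose[OF tendsto_arctan_at_top filterlim_tendsto_pos_mult_at_top[OF tendsto_const _ S]])
  show "z < 0 \<Longrightarrow> (\<lambda>n. arctan (z * real (Suc n))) \<longlonglongrightarrow> - (pi / 2)"
    by (rule filterlim_compose[OF tendsto_arctan_at_bot filterlim_tendsto_neg_mult_at_bot[OF tendsto_const _ S]])
qed

lemma Kp_lim: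
  assumes ab: "a \<le> b" and ya: "y \<noteq> a" and yb: "y \<noteq> b"
  shows "(\<lambda>n. Kp (inverse (real (Suc n))) a b y) \<longlonglongrightarrow> 2 * pi * indicator {a..b} y"
proof -
  have eq: "Kp (inverse (real (Suc n))) a b y = 2 * arctan ((b - y) * real (Suc n)) - 2 * arctan ((a - y) * real (Suc n))" for n
    using ab by (subst Kp_formula) (auto simp: divide_inverse)
  show ?thesis
  proof (cases "y < a")
    case True
    then have "(\<lambda>n. 2 * arctan ((b - y) * real (Suc n)) - 2 * arctan ((a - y) * real (Suc n))) \<longlonglongrightarrow> 2 * (pi/2) - 2 * (pi/2)"
      using ab by (intro tendsto_intros arctan_scaled_lim) auto
    then show ?thesis using True unfolding eq by (simp add: indicator_def)
  next
    case False
    show ?thesis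
    proof (cases "y > b")
      case True
      then have "(\<lambda>n. 2 * arctan ((b - y) * real (Suc n)) - 2 * arctan ((a - y) * real (Suc n))) \<longlonglongrightarrow> 2 * (- (pi/2)) - 2 * (- (pi/2))"
        using ab by (intro tendsto_intros arctan_scaled_lim) auto
      then show ?thesis using True unfolding eq by (simp add: indicator_def)
    next
      case False': False
      with False ya yb have y: "a < y" "y < b" by auto
      then have "(\<lambda>n. 2 * arctan ((b - y) * real (Suc n)) - 2 * arctan ((a - y) * real (Suc n))) \<longlonglongrightarrow> 2 * (pi/2) - 2 * (- (pi/2))"
        by (intro tendsto_intros arctan_scaled_lim) auto
      then show ?thesis using y unfolding eq by (simp add: indicator_def)
    qed
  qed
qed


lemma Lor_far:
  assumes e: "0 < e" "e \<le> 1" and t: "t \<noteq> 0"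
  shows "Lor e t \<le> 2 / t\<^sup>2"
proof -
  have t2: "0 < t\<^sup>2" using t by simp
  have "Lor e t = 2 * e / (e\<^sup>2 + t\<^sup>2)" by (simp add: Lor_def)
  also have "\<dots> \<le> 2 * e / t\<^sup>2"
    using e t2 by (intro divide_left_mono) (auto simp: add_pos_nonneg)
  also have "\<dots> \<le> 2 / t\<^sup>2" using e t2 by (intro divide_right_mono) auto
  finally show ?thesis .
qed

lemma Kp_dom:
  assumes e: "0 < e" "e \<le> 1" and ab: "a \<le> b"
  defines "L \<equiv> b - a + 1"
  defines "C \<equiv> (1 + L\<^sup>2) * (2 * pi + 8 * (b - a) / L\<^sup>2)"
  shows "Kp e a b y \<le> C / (1 + (y - (a + b) / 2)\<^sup>2)"
proof -
  define m where "m = (a + b) / 2"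
  define s where "s = \<bar>y - m\<bar>"
  have L: "L \<ge> 1" using ab by (simp add: L_def)
  have s2: "(y - m)\<^sup>2 = s\<^sup>2" by (simp add: s_def)
  have C1: "2 * pi * (1 + L\<^sup>2) \<le> C"
  proof -
    have X: "0 \<le> 8 * (b - a) / L\<^sup>2" using ab by simp
    have "(1 + L\<^sup>2) * (2 * pi) \<le> (1 + L\<^sup>2) * (2 * pi + 8 * (b - a) / L\<^sup>2)"
      using X by (intro mult_left_mono) (auto simp: add_nonneg_nonneg)
    then show ?thesis by (simp add: C_def mult.commute)
  qed
  have C2: "8 * (b - a) * (1 + L\<^sup>2) / L\<^sup>2 \<le> C"
    unfolding C_def using ab L by (simp add: field_simps)
  have pos: "0 < 1 + s\<^sup>2" by (simp add: add_pos_nonneg)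
  show ?thesis
  proof (cases "s < L")
    case True
    have "Kp e a b y \<le> 2 * pi" using Kp_le e ab by simp
    also have "2 * pi \<le> 2 * pi * (1 + L\<^sup>2) / (1 + s\<^sup>2)"
    proof -
      have "s\<^sup>2 \<le> L\<^sup>2" using True by (intro power_mono) (auto simp: s_def)
      then have "1 + s\<^sup>2 \<le> 1 + L\<^sup>2" by simp
      then show ?thesis using pos by (simp add: field_simps)
    qed
    also have "\<dots> \<le> C / (1 + s\<^sup>2)" using C1 pos by (intro divide_right_mono) auto
    finally show ?thesis by (simp add: m_def[symmetric] s2)
  next
    case False
    then have sL: "L \<le> s" by simp
    have spos: "0 < s" using sL L by simp
    have pt: "indicator {a..b} x * Lor e (x - y) \<le> indicator {a..b} x * (8 / s\<^sup>2)" for x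
    proof (cases "x \<in> {a..b}")
      case True
      have "\<bar>x - m\<bar> \<le> (b - a) / 2" using True unfolding m_def by (auto simp: abs_if field_simps)
      moreover have "(b - a) / 2 \<le> s / 2" using sL by (simp add: L_def)
      moreover have "\<bar>y - m\<bar> \<le> \<bar>x - y\<bar> + \<bar>x - m\<bar>"
        using abs_triangle_ineq[of "y - x" "x - m"] abs_minus_commute[of y x] by simp
      ultimately have xy: "s / 2 \<le> \<bar>x - y\<bar>" by (simp add: s_def)
      then have "x - y \<noteq> 0" using spos by auto
      have "(s / 2)\<^sup>2 \<le> (x - y)\<^sup>2"
        using xy spos by (metis abs_le_square_iff abs_of_nonneg less_imp_le zero_le_divide_iff zero_le_numeral)
      then have "s\<^sup>2 / 4 \<le> (x - y)\<^sup>2" by (simp add: power_divide)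
      then have "2 / (x - y)\<^sup>2 \<le> 2 / (s\<^sup>2 / 4)"
        using spos \<open>x - y \<noteq> 0\<close> by (intro divide_left_mono) auto
      also have "\<dots> = 8 / s\<^sup>2" by simp
      finally show ?thesis using Lor_far[OF e \<open>x - y \<noteq> 0\<close>] True by simp
    qed (simp)
    have "Kp e a b y \<le> (\<integral>x. indicator {a..b} x * (8 / s\<^sup>2) \<partial>lborel)"
      unfolding Kp_def
    proof (rule integral_mono)
      show "integrable lborel (\<lambda>x. indicator {a..b} x * Lor e (x - y))"
      proof -
        have cont: "continuous_on {a..b} (\<lambda>x. Lor e (x - y))"
          unfolding Lor_def using e by (intro continuous_intros) (auto simp: add_pos_nonneg)
        from borel_integrable_atLeastAtMost'[OF cont] show ?thesis by (simp add: set_integrable_def)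
      qed
      show "integrable lborel (\<lambda>x. indicator {a..b} x * (8 / s\<^sup>2))"
        by (intro integrable_mult_left) (simp add: integrable_indicator_iff emeasure_lborel_Icc_eq)
    qed (rule pt)
    also have "\<dots> = (b - a) * (8 / s\<^sup>2)" using ab by (simp add: emeasure_lborel_Icc_eq)
    also have "\<dots> \<le> C / (1 + s\<^sup>2)"
    proof -
      have "L\<^sup>2 \<le> s\<^sup>2" using sL L by (intro power_mono) auto
      then have key: "L\<^sup>2 * (1 + s\<^sup>2) \<le> s\<^sup>2 * (1 + L\<^sup>2)" by (simp add: algebra_simps)
      have nz: "s\<^sup>2 \<noteq> 0" "L\<^sup>2 \<noteq> 0" "1 + s\<^sup>2 \<noteq> 0" using spos L pos by auto
      have nz2: "L\<^sup>2 * (1 + s\<^sup>2) \<noteq> 0" using nz by simp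
      have "(b - a) * (8 / s\<^sup>2) = (8 * (b - a) * (L\<^sup>2 * (1 + s\<^sup>2))) / (s\<^sup>2 * (L\<^sup>2 * (1 + s\<^sup>2)))"
        using mult_divide_mult_cancel_right[OF nz2, of "8 * (b - a)" "s\<^sup>2"] by simp
      also have "\<dots> \<le> (8 * (b - a) * (s\<^sup>2 * (1 + L\<^sup>2))) / (s\<^sup>2 * (L\<^sup>2 * (1 + s\<^sup>2)))"
        using key ab spos L pos by (intro divide_right_mono mult_left_mono) auto
      also have "\<dots> = (s\<^sup>2 * (8 * (b - a) * (1 + L\<^sup>2))) / (s\<^sup>2 * (L\<^sup>2 * (1 + s\<^sup>2)))"
        by (simp only: ac_simps)
      also have "\<dots> = (8 * (b - a) * (1 + L\<^sup>2)) / (L\<^sup>2 * (1 + s\<^sup>2))"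
        using nz(1) by (rule mult_divide_mult_cancel_left)
      also have "\<dots> = 8 * (b - a) * (1 + L\<^sup>2) / L\<^sup>2 / (1 + s\<^sup>2)"
        by (simp only: divide_divide_eq_left)
      also have "\<dots> \<le> C / (1 + s\<^sup>2)" using C2 pos by (intro divide_right_mono) auto
      finally show ?thesis .
    qed
    finally show ?thesis by (simp add: m_def[symmetric] s2)
  qed
qed

lemma Hdom_integrable: "integrable lborel (\<lambda>y. C / (1 + (y - m)\<^sup>2))" for C m :: real
proof -
  have "integrable lborel (\<lambda>x. inverse (1 + ((- m) + 1 * x)\<^sup>2))"
    using lborel_integrable_real_affine_iff[of 1 "\<lambda>x. inverse (1 + x\<^sup>2)" "- m"] inv1p_integrable by simp
  then show ?thesis by (simp add: divide_inverse)
qed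

lemma Hdom_L2:
  fixes C m :: real
  assumes C: "C \<ge> 0"
  shows "L2 (\<lambda>y. complex_of_real (C / (1 + (y - m)\<^sup>2)))"
  unfolding L2_def
proof
  show "(\<lambda>y. complex_of_real (C / (1 + (y - m)\<^sup>2))) \<in> borel_measurable lborel" by measurable
  show "integrable lborel (\<lambda>x. (cmod (complex_of_real (C / (1 + (x - m)\<^sup>2))))\<^sup>2)"
  proof (rule Bochner_Integration.integrable_bound)
    show "integrable lborel (\<lambda>y. C * (C / (1 + (y - m)\<^sup>2)))" using Hdom_integrable by simp
    show "(\<lambda>x. (cmod (complex_of_real (C / (1 + (x - m)\<^sup>2))))\<^sup>2) \<in> borel_measurable lborel" by measurable
    show "AE x in lborel. norm ((cmod (complex_of_real (C / (1 + (x - m)\<^sup>2))))\<^sup>2) \<le> norm (C * (C / (1 + (x - m)\<^sup>2)))"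
    proof (rule AE_I2)
      fix x
      have p: "0 < 1 + (x - m)\<^sup>2" by (simp add: add_pos_nonneg)
      have "C / (1 + (x - m)\<^sup>2) \<le> C" using C p by (simp add: field_simps)
      then have "(C / (1 + (x - m)\<^sup>2)) * (C / (1 + (x - m)\<^sup>2)) \<le> C * (C / (1 + (x - m)\<^sup>2))"
        using C p by (intro mult_right_mono) auto
      then have "(C / (1 + (x - m)\<^sup>2))\<^sup>2 \<le> C * (C / (1 + (x - m)\<^sup>2))"
        by (simp only: power2_eq_square)
      moreover have "0 \<le> C * (C / (1 + (x - m)\<^sup>2))" using C p by simp
      ultimately show "norm ((cmod (complex_of_real (C / (1 + (x - m)\<^sup>2))))\<^sup>2) \<le> norm (C * (C / (1 + (x - m)\<^sup>2)))"
        by (simp only: norm_of_real power2_abs real_norm_def abs_of_nonneg zero_le_power2)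
    qed
  qed
qed

lemma Kp_L2:
  assumes e: "0 < e" "e \<le> 1" and ab: "a \<le> b"
  shows "L2 (\<lambda>y. complex_of_real (Kp e a b y))"
proof -
  define L where "L = b - a + 1"
  define C where "C = (1 + L\<^sup>2) * (2 * pi + 8 * (b - a) / L\<^sup>2)"
  have C0: "C \<ge> 0" using ab by (simp add: C_def L_def)
  have H: "L2 (\<lambda>y. complex_of_real (C / (1 + (y - (a + b) / 2)\<^sup>2)))" by (rule Hdom_L2[OF C0])
  have "nn2 (\<lambda>y. complex_of_real (Kp e a b y)) \<le> nn2 (\<lambda>y. complex_of_real (C / (1 + (y - (a + b) / 2)\<^sup>2)))"
  proof (rule nn2_meas_le)
    fix y
    have "Kp e a b y \<le> C / (1 + (y - (a + b) / 2)\<^sup>2)" using Kp_dom[OF e ab] by (simp add: C_def L_def)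
    moreover have "0 \<le> Kp e a b y" using Kp_nonneg e by simp
    moreover have "0 \<le> C / (1 + (y - (a + b) / 2)\<^sup>2)" using C0 by (simp add: add_pos_nonneg)
    ultimately show "cmod (complex_of_real (Kp e a b y)) \<le> cmod (complex_of_real (C / (1 + (y - (a + b) / 2)\<^sup>2)))"
      by (simp only: norm_of_real abs_of_nonneg)
  qed
  then have "nn2 (\<lambda>y. complex_of_real (Kp e a b y)) < \<infinity>" using L2_nn2[OF H] by (simp add: le_less_trans)
  moreover have "(\<lambda>y. complex_of_real (Kp e a b y)) \<in> borel_measurable borel"
    using Kp_meas[OF e(1) ab] by measurable
  ultimately show ?thesis by (simp add: L2_iff)
qed


lemma bmult_integrable:
  fixes f h :: "real \<Rightarrow> complex"
  assumes f: "integrable lborel f" and h: "h \<in> borel_measurable borel" and hb: "\<And>x. cmod (h x) \<le> B"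
  shows "integrable lborel (\<lambda>x. f x * h x)"
proof (rule Bochner_Integration.integrable_bound)
  show "integrable lborel (\<lambda>x. B * norm (f x))" using f by auto
  show "(\<lambda>x. f x * h x) \<in> borel_measurable lborel" using f h by auto
  show "AE x in lborel. norm (f x * h x) \<le> norm (B * norm (f x))"
  proof (rule AE_I2)
    fix x
    have B: "0 \<le> B" using hb[of x] norm_ge_zero order_trans by blast
    have "norm (f x * h x) \<le> B * norm (f x)"
      using mult_left_mono[OF hb[of x], of "norm (f x)"] by (simp add: norm_mult mult.commute)
    also have "\<dots> \<le> norm (B * norm (f x))" using B by simp
    finally show "norm (f x * h x) \<le> norm (B * norm (f x))" .
  qed
qed

lemma iFT_meas[measurable]: "g \<in> borel_measurable borel \<Longrightarrow> iFT g \<in> borel_measurable borel"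
  unfolding iFT_def by (intro lborel.borel_measurable_lebesgue_integral) (simp add: split_beta')

lemma iFT_bound: "cmod (iFT g x) \<le> (\<integral>k. cmod (g k) \<partial>lborel)"
proof -
  have "cmod (iFT g x) \<le> (\<integral>k. norm (g k * cis (k * x)) \<partial>lborel)"
    unfolding iFT_def by (rule integral_norm_bound)
  then show ?thesis by (simp add: norm_mult)
qed

definition cI :: "real \<Rightarrow> real \<Rightarrow> real \<Rightarrow> complex" where
  "cI a b k = (\<integral>x. complex_of_real (indicator {a..b} x) * cis (k * x) \<partial>lborel)"

lemma chi_integrable: "integrable lborel (\<lambda>x. complex_of_real (indicator {a..b} x))" for a b :: real
proof -
  have "integrable lborel (\<lambda>x. indicator {a..b} x :: real)"
    using borel_integrable_atLeastAtMost'[of a b "\<lambda>_. 1::real"] by (simp add: set_integrable_def)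
  then show ?thesis by (simp add: complex_of_real_integrable_eq)
qed

lemma cI_meas[measurable]: "cI a b \<in> borel_measurable borel"
  unfolding cI_def by (intro lborel.borel_measurable_lebesgue_integral) (simp add: split_beta')

lemma cI_bound: "a \<le> b \<Longrightarrow> cmod (cI a b k) \<le> b - a"
proof -
  assume ab: "a \<le> b"
  have "cmod (cI a b k) \<le> (\<integral>x. norm (complex_of_real (indicator {a..b} x) * cis (k * x)) \<partial>lborel)"
    unfolding cI_def by (rule integral_norm_bound)
  also have "\<dots> = (\<integral>x. indicator {a..b} x \<partial>lborel)"
    by (intro Bochner_Integration.integral_cong) (auto simp: norm_mult indicator_def)
  also have "\<dots> = b - a" using ab by (simp add: emeasure_lborel_Icc_eq)
  finally show ?thesis .
qed

lemma step_A:
  assumes g: "integrable lborel g"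
  shows "(\<integral>x. complex_of_real (indicator {a..b} x) * iFT g x \<partial>lborel) = (\<integral>k. g k * cI a b k \<partial>lborel)"
  unfolding iFT_def cI_def
  by (rule swap_integral[symmetric]) (use g chi_integrable in auto)

lemma Psi_c_integrable:
  assumes e: "e > 0" and ab: "a \<le> b"
  shows "integrable lborel (\<lambda>k. complex_of_real (exp (- e * \<bar>k\<bar>)) * cI a b k)"
  using bmult_integrable[OF exp_cis_integrable[OF e, of 0] cI_meas cI_bound[OF ab]] by simp

lemma Psi_c_L2:
  assumes e: "e > 0" and ab: "a \<le> b"
  shows "L2 (\<lambda>k. complex_of_real (exp (- e * \<bar>k\<bar>)) * cI a b k)"
  unfolding L2_def
proof
  show "(\<lambda>k. complex_of_real (exp (- e * \<bar>k\<bar>)) * cI a b k) \<in> borel_measurable lborel" by measurable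
  show "integrable lborel (\<lambda>x. (cmod (complex_of_real (exp (- e * \<bar>x\<bar>)) * cI a b x))\<^sup>2)"
  proof (rule Bochner_Integration.integrable_bound)
    show "integrable lborel (\<lambda>k. (b - a)\<^sup>2 * exp (- e * \<bar>k\<bar>))" using exp_integrable[OF e] by simp
    show "(\<lambda>x. (cmod (complex_of_real (exp (- e * \<bar>x\<bar>)) * cI a b x))\<^sup>2) \<in> borel_measurable lborel"
      by measurable
    show "AE x in lborel. norm ((cmod (complex_of_real (exp (- e * \<bar>x\<bar>)) * cI a b x))\<^sup>2) \<le> norm ((b - a)\<^sup>2 * exp (- e * \<bar>x\<bar>))"
    proof (rule AE_I2)
      fix x
      have E: "0 < exp (- e * \<bar>x\<bar>)" "exp (- e * \<bar>x\<bar>) \<le> 1" using e by auto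
      have "(cmod (complex_of_real (exp (- e * \<bar>x\<bar>)) * cI a b x))\<^sup>2 = (exp (- e * \<bar>x\<bar>))\<^sup>2 * (cmod (cI a b x))\<^sup>2"
        by (simp add: norm_mult power_mult_distrib)
      also have "\<dots> \<le> exp (- e * \<bar>x\<bar>) * (b - a)\<^sup>2"
      proof (rule mult_mono)
        show "(exp (- e * \<bar>x\<bar>))\<^sup>2 \<le> exp (- e * \<bar>x\<bar>)" using E by (simp add: power2_eq_square mult_left_le_one_le)
        show "(cmod (cI a b x))\<^sup>2 \<le> (b - a)\<^sup>2" using cI_bound[OF ab, of x] by (intro power_mono) auto
      qed (use E in auto)
      finally show "norm ((cmod (complex_of_real (exp (- e * \<bar>x\<bar>)) * cI a b x))\<^sup>2) \<le> norm ((b - a)\<^sup>2 * exp (- e * \<bar>x\<bar>))"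
        by (simp add: mult.commute)
    qed
  qed
qed

lemma step_C2:
  assumes u: "L2 u" and e: "e > 0" and ab: "a \<le> b"
  shows "(\<integral>k. Fr u R k * (complex_of_real (exp (- e * \<bar>k\<bar>)) * cI a b k) \<partial>lborel)
       = (\<integral>y. (indicator {-R..R} y *\<^sub>R u y) * complex_of_real (Kp e a b y) \<partial>lborel)"
proof -
  define uR where "uR y = indicator {-R..R} y *\<^sub>R u y" for y
  define P where "P k = complex_of_real (exp (- e * \<bar>k\<bar>))" for k
  have uRi: "integrable lborel uR"
    using L2_set_integrable[OF u, of "\<lambda>_. 1" "-R" R] unfolding uR_def set_integrable_def by simp
  have Pc: "integrable lborel (\<lambda>k. P k * cI a b k)" unfolding P_def by (rule Psi_c_integrable[OF e ab])
  have "(\<integral>k. Fr u R k * (P k * cI a b k) \<partial>lborel) = (\<integral>k. (P k * cI a b k) * (\<integral>y. uR y * cis (- (k * y)) \<partial>lborel) \<partial>lborel)"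
    by (simp add: Fr_FT FT_def uR_def mult.commute)
  also have "\<dots> = (\<integral>y. uR y * (\<integral>k. (P k * cI a b k) * cis (- (k * y)) \<partial>lborel) \<partial>lborel)"
    by (rule swap_integral) (use uRi Pc in auto)
  also have "\<dots> = (\<integral>y. uR y * complex_of_real (Kp e a b y) \<partial>lborel)"
  proof (rule Bochner_Integration.integral_cong[OF refl])
    fix y
    have "(\<integral>k. (P k * cI a b k) * cis (- (k * y)) \<partial>lborel) =
          (\<integral>k. (P k * cis (- (k * y))) * (\<integral>x. complex_of_real (indicator {a..b} x) * cis (k * x) \<partial>lborel) \<partial>lborel)"
      unfolding cI_def by (simp add: ac_simps)
    also have "\<dots> = (\<integral>x. complex_of_real (indicator {a..b} x) * (\<integral>k. (P k * cis (- (k * y))) * cis (k * x) \<partial>lborel) \<partial>lborel)"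
    proof (rule swap_integral)
      show "integrable lborel (\<lambda>k. P k * cis (- (k * y)))"
        using exp_cis_integrable[OF e, of "- y"] by (simp add: P_def)
    qed (use chi_integrable in auto)
    also have "\<dots> = (\<integral>x. complex_of_real (indicator {a..b} x * Lor e (x - y)) \<partial>lborel)"
    proof (rule Bochner_Integration.integral_cong[OF refl])
      fix x
      have "(\<integral>k. (P k * cis (- (k * y))) * cis (k * x) \<partial>lborel) =
            (\<integral>k. complex_of_real (exp (- e * \<bar>k\<bar>)) * cis (k * (x - y)) \<partial>lborel)"
        by (intro Bochner_Integration.integral_cong refl) (simp add: P_def mult.assoc cis_mult right_diff_distrib)
      also have "\<dots> = complex_of_real (Lor e (x - y))"
        using exp_ft[OF e, of "x - y"] by (simp add: has_bochner_integral_iff)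
      finally show "complex_of_real (indicator {a..b} x) * (\<integral>k. (P k * cis (- (k * y))) * cis (k * x) \<partial>lborel) =
          complex_of_real (indicator {a..b} x * Lor e (x - y))" by simp
    qed
    also have "\<dots> = complex_of_real (Kp e a b y)"
      unfolding Kp_def by (rule integral_complex_of_real)
    finally show "uR y * (\<integral>k. (P k * cI a b k) * cis (- (k * y)) \<partial>lborel) = uR y * complex_of_real (Kp e a b y)"
      by simp
  qed
  finally show ?thesis unfolding P_def uR_def .
qed


lemma inversion:
  assumes F: "is_fourier u g" and gi: "integrable lborel g"
  shows "AE x in lborel. u x = iFT g x / complex_of_real (2 * pi)"
proof -
  have u: "L2 u" "L2 g" and e: "((\<lambda>R. nn2 (\<lambda>k. g k - Fr u R k)) \<longlongrightarrow> 0) at_top"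
    using F by (auto simp: is_fourier_Fr)
  have eseq: "(\<lambda>j. nn2 (\<lambda>k. g k - Fr u (real j) k)) \<longlonglongrightarrow> 0"
    by (rule filterlim_compose[OF e filterlim_real_sequentially])
  have um[measurable]: "u \<in> borel_measurable borel" and gm[measurable]: "g \<in> borel_measurable borel"
    using u L2_meas by auto
  define Mg where "Mg = (\<integral>k. cmod (g k) \<partial>lborel)"
  have iFTb: "cmod (iFT g x) \<le> Mg" for x unfolding Mg_def by (rule iFT_bound)
  have Frm[measurable]: "Fr u R \<in> borel_measurable borel" for R
    unfolding Fr_FT[abs_def] by (intro FT_meas) measurable
  have Frb: "\<exists>B. \<forall>k. cmod (Fr u R k) \<le> B" for R
  proof -
    have "integrable lborel (\<lambda>x. indicator {-R..R} x *\<^sub>R u x)"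
      using L2_set_integrable[OF u(1), of "\<lambda>_. 1" "-R" R] unfolding set_integrable_def by simp
    from FT_bound[OF this] show ?thesis unfolding Fr_FT by blast
  qed
  have main: "(\<integral>x. complex_of_real (indicator {a..b} x) * iFT g x \<partial>lborel) =
      complex_of_real (2 * pi) * (\<integral>x. complex_of_real (indicator {a..b} x) * u x \<partial>lborel)" if ab: "a \<le> b" for a b
  proof -
    define en where "en n = inverse (real (Suc n))" for n
    have en: "0 < en n" "en n \<le> 1" for n by (auto simp: en_def field_simps)
    define P where "P n k = complex_of_real (exp (- en n * \<bar>k\<bar>))" for n k
    have Pm[measurable]: "P n \<in> borel_measurable borel" for n unfolding P_def by measurable
    have Pb: "cmod (P n k) \<le> 1" for n k using en(1)[of n] by (simp add: P_def)
    have cIb: "cmod (cI a b k) \<le> b - a" for k by (rule cI_bound[OF ab])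
    have B: "(\<lambda>n. \<integral>k. g k * (P n k * cI a b k) \<partial>lborel) \<longlonglongrightarrow> (\<integral>k. g k * cI a b k \<partial>lborel)"
    proof (rule integral_dominated_convergence[where w="\<lambda>k. norm (g k) * (b - a)"])
      show "integrable lborel (\<lambda>k. norm (g k) * (b - a))" using gi by auto
      show "AE k in lborel. (\<lambda>n. g k * (P n k * cI a b k)) \<longlonglongrightarrow> g k * cI a b k"
      proof (rule AE_I2)
        fix k
        have "(\<lambda>n. exp (- en n * \<bar>k\<bar>)) \<longlonglongrightarrow> exp (- 0 * \<bar>k\<bar>)"
          unfolding en_def by (intro tendsto_intros LIMSEQ_inverse_real_of_nat)
        then have "(\<lambda>n. P n k) \<longlonglongrightarrow> 1" unfolding P_def
          by (metis (no_types) exp_zero minus_zero mult_zero_left of_real_1 tendsto_of_real)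
        then show "(\<lambda>n. g k * (P n k * cI a b k)) \<longlonglongrightarrow> g k * cI a b k"
          by (auto intro!: tendsto_eq_intros)
      qed
      show "AE k in lborel. norm (g k * (P n k * cI a b k)) \<le> norm (g k) * (b - a)" for n
      proof (rule AE_I2)
        fix k
        have "norm (P n k * cI a b k) \<le> 1 * (b - a)"
          unfolding norm_mult by (rule mult_mono[OF Pb cIb]) auto
        then show "norm (g k * (P n k * cI a b k)) \<le> norm (g k) * (b - a)"
          by (simp add: norm_mult mult_left_mono)
      qed
    qed auto
    have C: "(\<integral>k. g k * (P n k * cI a b k) \<partial>lborel) = (\<integral>y. u y * complex_of_real (Kp (en n) a b y) \<partial>lborel)" for n
    proof -
      define \<phi> where "\<phi> k = P n k * cI a b k" for k
      have \<phi>i: "integrable lborel \<phi>" unfolding \<phi>_def P_def by (rule Psi_c_integrable[OF en(1) ab])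
      have \<phi>L: "L2 \<phi>" unfolding \<phi>_def P_def by (rule Psi_c_L2[OF en(1) ab])
      have \<phi>b: "cmod (\<phi> k) \<le> b - a" for k
      proof -
        have "cmod (\<phi> k) \<le> 1 * (b - a)" unfolding \<phi>_def norm_mult by (rule mult_mono[OF Pb cIb]) auto
        then show ?thesis by simp
      qed
      have C1: "(\<lambda>j. \<integral>k. Fr u (real j) k * \<phi> k \<partial>lborel) \<longlonglongrightarrow> (\<integral>k. g k * \<phi> k \<partial>lborel)"
      proof (rule L2_inner_lim[OF eseq \<phi>L gm])
        show "Fr u (real j) \<in> borel_measurable borel" for j by simp
        show "integrable lborel (\<lambda>k. Fr u (real j) k * \<phi> k)" for j
        proof -
          obtain B where B: "\<And>k. cmod (Fr u (real j) k) \<le> B" using Frb by blast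
          have "integrable lborel (\<lambda>k. \<phi> k * Fr u (real j) k)" by (rule bmult_integrable[OF \<phi>i Frm B])
          then show ?thesis by (simp add: mult.commute)
        qed
        show "integrable lborel (\<lambda>k. g k * \<phi> k)"
          by (rule bmult_integrable[OF gi _ \<phi>b]) (simp add: \<phi>_def)
      qed
      have C2: "(\<integral>k. Fr u (real j) k * \<phi> k \<partial>lborel) = (\<integral>y. (indicator {- real j..real j} y *\<^sub>R u y) * complex_of_real (Kp (en n) a b y) \<partial>lborel)" for j
        unfolding \<phi>_def P_def by (rule step_C2[OF u(1) en(1) ab])
      have KL: "L2 (\<lambda>y. complex_of_real (Kp (en n) a b y))" by (rule Kp_L2[OF en ab])
      have uK: "integrable lborel (\<lambda>y. u y * complex_of_real (Kp (en n) a b y))"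
        by (rule L2_prod_integrable[OF u(1) KL])
      have C3: "(\<lambda>j. \<integral>y. (indicator {- real j..real j} y *\<^sub>R u y) * complex_of_real (Kp (en n) a b y) \<partial>lborel)
          \<longlonglongrightarrow> (\<integral>y. u y * complex_of_real (Kp (en n) a b y) \<partial>lborel)"
      proof (rule integral_dominated_convergence[where w="\<lambda>y. norm (u y * complex_of_real (Kp (en n) a b y))"])
        show "integrable lborel (\<lambda>y. norm (u y * complex_of_real (Kp (en n) a b y)))" using uK by auto
        show "(\<lambda>y. u y * complex_of_real (Kp (en n) a b y)) \<in> borel_measurable lborel" using uK by auto
        show "(\<lambda>y. (indicator {- real j..real j} y *\<^sub>R u y) * complex_of_real (Kp (en n) a b y)) \<in> borel_measurable lborel" for j
          using uK by auto
        show "AE y in lborel. (\<lambda>j. (indicator {- real j..real j} y *\<^sub>R u y) * complex_of_real (Kp (en n) a b y))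
            \<longlonglongrightarrow> u y * complex_of_real (Kp (en n) a b y)"
        proof (rule AE_I2, rule tendsto_eventually)
          fix y
          have "eventually (\<lambda>j. \<bar>y\<bar> \<le> real j) sequentially"
            using filterlim_real_sequentially by (simp add: filterlim_at_top)
          then show "eventually (\<lambda>j. (indicator {- real j..real j} y *\<^sub>R u y) * complex_of_real (Kp (en n) a b y)
              = u y * complex_of_real (Kp (en n) a b y)) sequentially"
            by eventually_elim (auto simp: indicator_def abs_le_iff)
        qed
        show "AE y in lborel. norm ((indicator {- real j..real j} y *\<^sub>R u y) * complex_of_real (Kp (en n) a b y))
            \<le> norm (u y * complex_of_real (Kp (en n) a b y))" for j
          by (rule AE_I2) (auto simp: indicator_def norm_mult)
      qed
      have "(\<integral>k. g k * \<phi> k \<partial>lborel) = (\<integral>y. u y * complex_of_real (Kp (en n) a b y) \<partial>lborel)"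
        using C1 C3 unfolding C2 by (rule LIMSEQ_unique)
      then show ?thesis unfolding \<phi>_def .
    qed
    define L where "L = b - a + 1"
    define Cc where "Cc = (1 + L\<^sup>2) * (2 * pi + 8 * (b - a) / L\<^sup>2)"
    have Cc0: "Cc \<ge> 0" using ab by (simp add: Cc_def L_def)
    have HL: "L2 (\<lambda>y. complex_of_real (Cc / (1 + (y - (a + b) / 2)\<^sup>2)))" by (rule Hdom_L2[OF Cc0])
    have uH: "integrable lborel (\<lambda>y. u y * complex_of_real (Cc / (1 + (y - (a + b) / 2)\<^sup>2)))"
      by (rule L2_prod_integrable[OF u(1) HL])
    have D: "(\<lambda>n. \<integral>y. u y * complex_of_real (Kp (en n) a b y) \<partial>lborel)
        \<longlonglongrightarrow> (\<integral>y. u y * complex_of_real (2 * pi * indicator {a..b} y) \<partial>lborel)"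
    proof (rule integral_dominated_convergence[where w="\<lambda>y. norm (u y * complex_of_real (Cc / (1 + (y - (a + b) / 2)\<^sup>2)))"])
      show "integrable lborel (\<lambda>y. norm (u y * complex_of_real (Cc / (1 + (y - (a + b) / 2)\<^sup>2))))" using uH by auto
      show "(\<lambda>y. u y * complex_of_real (2 * pi * indicator {a..b} y)) \<in> borel_measurable lborel" by measurable
      show "(\<lambda>y. u y * complex_of_real (Kp (en n) a b y)) \<in> borel_measurable lborel" for n
        using Kp_meas[OF en(1) ab, of n] by measurable
      show "AE y in lborel. (\<lambda>n. u y * complex_of_real (Kp (en n) a b y)) \<longlonglongrightarrow> u y * complex_of_real (2 * pi * indicator {a..b} y)"
        using AE_lborel_singleton[of a] AE_lborel_singleton[of b]
      proof eventually_elim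
        case (elim y)
        have "(\<lambda>n. Kp (en n) a b y) \<longlonglongrightarrow> 2 * pi * indicator {a..b} y"
          unfolding en_def using Kp_lim[OF ab] elim by auto
        then show ?case by (intro tendsto_intros)
      qed
      show "AE y in lborel. norm (u y * complex_of_real (Kp (en n) a b y)) \<le> norm (u y * complex_of_real (Cc / (1 + (y - (a + b) / 2)\<^sup>2)))" for n
      proof (rule AE_I2)
        fix y
        have k0: "0 \<le> Kp (en n) a b y" using Kp_nonneg en by simp
        have kd: "Kp (en n) a b y \<le> Cc / (1 + (y - (a + b) / 2)\<^sup>2)"
          using Kp_dom[OF en ab] by (simp add: Cc_def L_def)
        have h0: "0 \<le> Cc / (1 + (y - (a + b) / 2)\<^sup>2)" using Cc0 by (simp add: add_pos_nonneg)
        have "norm (u y * complex_of_real (Kp (en n) a b y)) = norm (u y) * Kp (en n) a b y"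
          using k0 by (simp only: norm_mult norm_of_real abs_of_nonneg)
        also have "\<dots> \<le> norm (u y) * (Cc / (1 + (y - (a + b) / 2)\<^sup>2))"
          using kd by (intro mult_left_mono) auto
        also have "\<dots> = norm (u y * complex_of_real (Cc / (1 + (y - (a + b) / 2)\<^sup>2)))"
          using h0 by (simp only: norm_mult norm_of_real abs_of_nonneg)
        finally show "norm (u y * complex_of_real (Kp (en n) a b y)) \<le> norm (u y * complex_of_real (Cc / (1 + (y - (a + b) / 2)\<^sup>2)))" .
      qed
    qed
    have "(\<integral>x. complex_of_real (indicator {a..b} x) * iFT g x \<partial>lborel) = (\<integral>k. g k * cI a b k \<partial>lborel)"
      by (rule step_A[OF gi])
    also have "\<dots> = (\<integral>y. u y * complex_of_real (2 * pi * indicator {a..b} y) \<partial>lborel)"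
      using B D unfolding C by (rule LIMSEQ_unique)
    also have "\<dots> = (\<integral>y. complex_of_real (2 * pi) * (complex_of_real (indicator {a..b} y) * u y) \<partial>lborel)"
      by (simp add: ac_simps)
    also have "\<dots> = complex_of_real (2 * pi) * (\<integral>x. complex_of_real (indicator {a..b} x) * u x \<partial>lborel)"
      by (rule integral_mult_right_zero)
    finally show ?thesis .
  qed
  define v where "v x = u x - iFT g x / complex_of_real (2 * pi)" for x
  have "AE x in lborel. v x = 0"
  proof (rule zero_from_intervals)
    fix a b :: real
    have su: "set_integrable lborel {a..b} u"
      using L2_set_integrable[OF u(1), of "\<lambda>_. 1" a b] by simp
    have si: "set_integrable lborel {a..b} (iFT g)"
    proof -
      have "integrable lborel (\<lambda>x. complex_of_real (indicator {a..b} x) * iFT g x)"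
        by (rule bmult_integrable[OF chi_integrable _ iFTb]) simp
      then show ?thesis unfolding set_integrable_def by (simp add: scaleR_conv_of_real)
    qed
    show "set_integrable lborel {a..b} v"
      unfolding v_def using su si by (intro set_integral_diff set_integrable_divide)
    assume ab: "a \<le> b"
    have "(LINT x:{a..b}|lborel. v x) = (LINT x:{a..b}|lborel. u x) - (LINT x:{a..b}|lborel. iFT g x) / complex_of_real (2 * pi)"
      unfolding v_def using su si by (simp add: set_integral_diff set_integrable_divide set_integral_divide_zero)
    also have "(LINT x:{a..b}|lborel. iFT g x) = complex_of_real (2 * pi) * (LINT x:{a..b}|lborel. u x)"
      using main[OF ab] by (simp add: set_lebesgue_integral_def scaleR_conv_of_real)
    finally show "(LINT x:{a..b}|lborel. v x) = 0" by simp
  qed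
  then show ?thesis by (simp add: v_def)
qed


lemma fourier_lower:
  assumes F: "is_fourier u g" and gi: "integrable lborel g"
  shows "nn2 u \<le> ennreal (1 / (2 * pi)) * nn2 g"
proof -
  have gm[measurable]: "g \<in> borel_measurable borel" using gi by auto
  have "nn2 u = nn2 (\<lambda>x. iFT g x / complex_of_real (2 * pi))"
    unfolding nn2_def by (intro nn_integral_cong_AE) (use inversion[OF F gi] in auto)
  also have "\<dots> = (ennreal (1 / (2 * pi)))\<^sup>2 * nn2 (iFT g)"
  proof -
    have "nn2 (\<lambda>x. iFT g x / complex_of_real (2 * pi)) = (\<integral>\<^sup>+x. ennreal ((1 / (2 * pi))\<^sup>2) * ennreal ((cmod (iFT g x))\<^sup>2) \<partial>lborel)"
      unfolding nn2_def by (intro nn_integral_cong) (simp add: ennreal_mult'[symmetric] norm_divide power_divide)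
    also have "\<dots> = ennreal ((1 / (2 * pi))\<^sup>2) * nn2 (iFT g)"
      unfolding nn2_def by (intro nn_integral_cmult) measurable
    finally show ?thesis by (simp add: ennreal_power)
  qed
  also have "\<dots> \<le> (ennreal (1 / (2 * pi)))\<^sup>2 * (ennreal (2 * pi) * nn2 g)"
    by (intro mult_left_mono core_inv[OF gi]) auto
  also have "\<dots> = ennreal (1 / (2 * pi)) * nn2 g"
  proof -
    have "(ennreal (1 / (2 * pi)))\<^sup>2 * ennreal (2 * pi) = ennreal (1 / (2 * pi))"
      by (simp add: ennreal_power ennreal_mult'[symmetric] power2_eq_square)
    then show ?thesis by (simp add: mult.assoc[symmetric])
  qed
  finally show ?thesis .
qed

lemma weight_bound:
  assumes m: "m \<ge> 1"
  shows "cmod z \<le> ((cmod (complex_of_real ((1 + k\<^sup>2) powr (m / 2)) * z))\<^sup>2 + inverse (1 + k\<^sup>2)) / 2"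
proof -
  define p where "p = (1 + k\<^sup>2) powr (m / 2)"
  have q: "1 \<le> 1 + k\<^sup>2" by simp
  have q0: "1 + k\<^sup>2 \<noteq> 0" using zero_le_power2[of k] by linarith
  have p0: "0 < p" using q0 by (simp add: p_def)
  have pp: "p * p = (1 + k\<^sup>2) powr m" unfolding p_def
    using q0 by (simp add: powr_add[symmetric])
  have "(1 + k\<^sup>2) powr 1 \<le> (1 + k\<^sup>2) powr m" using m q by (intro powr_mono) auto
  then have "1 + k\<^sup>2 \<le> p * p" using pp by (simp add: add_pos_nonneg)
  then have ip: "inverse (p * p) \<le> inverse (1 + k\<^sup>2)"
    by (intro le_imp_inverse_le) (auto simp: add_pos_nonneg)
  have "cmod z = (p * cmod z) * inverse p" using p0 by simp
  also have "\<dots> \<le> ((p * cmod z)\<^sup>2 + (inverse p)\<^sup>2) / 2"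
    using amgm_cmod[of "complex_of_real (p * cmod z)" "complex_of_real (inverse p)"] p0
    by (simp add: norm_mult abs_mult norm_inverse)
  also have "\<dots> \<le> ((p * cmod z)\<^sup>2 + inverse (1 + k\<^sup>2)) / 2"
    using ip by (simp add: power2_eq_square)
  finally show ?thesis using p0 by (simp add: p_def norm_mult)
qed

lemma Hm_integrable:
  assumes m: "m \<ge> 1" and H: "Hm m u" and F: "is_fourier u g"
  shows "integrable lborel g"
proof -
  obtain g0 where F0: "is_fourier u g0" and W: "L2 (\<lambda>k. complex_of_real ((1 + k\<^sup>2) powr (m / 2)) * g0 k)"
    using H unfolding Hm_def by blast
  have g0m: "g0 \<in> borel_measurable borel" using F0 by (auto simp: is_fourier_Fr L2_meas)
  have i0: "integrable lborel g0"
  proof (rule Bochner_Integration.integrable_bound)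
    show "integrable lborel (\<lambda>k. ((cmod (complex_of_real ((1 + k\<^sup>2) powr (m / 2)) * g0 k))\<^sup>2 + inverse (1 + k\<^sup>2)) / 2)"
      using W inv1p_integrable unfolding L2_def by auto
    show "g0 \<in> borel_measurable lborel" using g0m by simp
    show "AE x in lborel. norm (g0 x) \<le> norm (((cmod (complex_of_real ((1 + x\<^sup>2) powr (m / 2)) * g0 x))\<^sup>2 + inverse (1 + x\<^sup>2)) / 2)"
      using weight_bound[OF m] by (auto intro!: AE_I2 order_trans[OF weight_bound[OF m]])
  qed
  have "AE k in lborel. g0 k = g k" by (rule is_fourier_unique[OF F0 F])
  moreover have "g \<in> borel_measurable lborel" using F by (auto simp: is_fourier_Fr L2_meas)
  ultimately show ?thesis using i0 g0m by (subst integrable_cong_AE[symmetric]) auto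
qed

lemma Hm_bounded:
  assumes m: "m \<ge> 1" and H: "Hm m u"
  shows "\<exists>C. AE x in lborel. cmod (u x) \<le> C"
proof -
  obtain g0 where F0: "is_fourier u g0" using H unfolding Hm_def by blast
  have i0: "integrable lborel g0" by (rule Hm_integrable[OF m H F0])
  have "AE x in lborel. cmod (u x) \<le> (\<integral>k. cmod (g0 k) \<partial>lborel) / (2 * pi)"
    using inversion[OF F0 i0]
  proof eventually_elim
    case (elim x)
    then show ?case using iFT_bound[of g0 x] by (simp add: norm_divide divide_right_mono)
  qed
  then show ?thesis by blast
qed


lemma symbol_facts:
  fixes lam c t :: real
  assumes lam: "lam > 0"
  defines "E \<equiv> complex_of_real lam / (complex_of_real lam - \<i> * complex_of_real t)"
  shows "Re (1 - E) \<le> 1" "cmod (1 - E) \<le> 1" "cmod (1 - E) \<le> \<bar>t\<bar> / lam"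
proof -
  define q where "q = complex_of_real lam - \<i> * complex_of_real t"
  have q0: "q \<noteq> 0" using lam by (auto simp: q_def complex_eq_iff)
  have nq: "0 < cmod q" using q0 by simp
  have ReE: "0 \<le> Re E"
    unfolding E_def using lam by (simp add: Re_divide)
  then show "Re (1 - E) \<le> 1" by simp
  have N: "1 - E = - (\<i> * complex_of_real t) / q"
    unfolding E_def q_def[symmetric] using q0 by (simp add: field_simps q_def)
  have nN: "cmod (1 - E) = \<bar>t\<bar> / cmod q" unfolding N by (simp add: norm_divide norm_mult)
  have "lam \<le> cmod q" using abs_Re_le_cmod[of q] lam by (simp add: q_def)
  then show "cmod (1 - E) \<le> \<bar>t\<bar> / lam" unfolding nN using lam nq by (intro divide_left_mono) auto
  have "\<bar>t\<bar> \<le> cmod q" using abs_Im_le_cmod[of q] by (simp add: q_def)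
  then show "cmod (1 - E) \<le> 1" unfolding nN using nq by simp
qed

lemma symbol_bound:
  fixes \<alpha> :: "real \<Rightarrow> real" and z :: complex
  assumes c: "c > 1" and a: "a > 0" and d: "d > 0" and m: "m \<ge> 1"
    and \<rho>: "\<rho> \<ge> 1" "\<rho> \<ge> K" "\<rho> \<ge> 1 / (c * a * d)"
    and lam: "lam > \<rho> / (d * (1 - 1 / c))"
    and \<alpha>0: "\<alpha> k \<ge> 0" and \<alpha>K: "\<bar>k\<bar> \<ge> K \<Longrightarrow> a * \<bar>k\<bar> powr m \<le> \<alpha> k"
    and z: "Re z \<le> 0"
  defines "D \<equiv> complex_of_real (\<alpha> k) + 1 - z - (1 - E_symbol c lam k) / complex_of_real c"
  shows "D \<noteq> 0" "cmod (1 - E_symbol c lam k) \<le> c * d * cmod D"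
proof -
  have c0: "c > 0" using c by simp
  have c1: "0 < 1 - 1 / c" using c by (simp add: field_simps)
  have lam0: "lam > 0" using lam \<rho> d c1 by (smt (verit) divide_pos_pos mult_pos_pos)
  have E: "E_symbol c lam k = complex_of_real lam / (complex_of_real lam - \<i> * complex_of_real (c * k))"
    by (simp add: E_symbol_def)
  note sf = symbol_facts[OF lam0, of "c * k", folded E]
  have ReD: "Re D \<ge> \<alpha> k + (1 - 1 / c)"
  proof -
    have "Re ((1 - E_symbol c lam k) / complex_of_real c) = Re (1 - E_symbol c lam k) / c"
      by (simp add: Re_divide_of_real)
    also have "\<dots> \<le> 1 / c" using sf(1) c0 by (intro divide_right_mono) auto
    finally have "Re ((1 - E_symbol c lam k) / complex_of_real c) \<le> 1 / c" .
    then show ?thesis using z unfolding D_def by simp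
  qed
  have nD: "Re D \<le> cmod D" by (rule complex_Re_le_cmod)
  have RD0: "Re D > 0" using ReD \<alpha>0 c1 by linarith
  then show "D \<noteq> 0" by auto
  show "cmod (1 - E_symbol c lam k) \<le> c * d * cmod D"
  proof (cases "\<bar>k\<bar> \<le> \<rho>")
    case True
    have "cmod (1 - E_symbol c lam k) \<le> \<bar>c * k\<bar> / lam" by (rule sf(3))
    also have "\<dots> \<le> c * \<rho> / lam" using True c0 lam0 by (intro divide_right_mono) (auto simp: abs_mult)
    also have "\<dots> \<le> c * d * (1 - 1 / c)"
    proof -
      have pos: "0 < d * (1 - 1 / c)" using d c1 by simp
      have "\<rho> < lam * (d * (1 - 1 / c))" using lam unfolding pos_divide_less_eq[OF pos] .
      then have "\<rho> / lam \<le> d * (1 - 1 / c)" using lam0 by (simp add: field_simps)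
      then show ?thesis using c0 by (simp add: mult.assoc mult_left_mono times_divide_eq_right[symmetric] del: times_divide_eq_right)
    qed
    also have "\<dots> \<le> c * d * cmod D"
      using ReD nD \<alpha>0 c0 d by (intro mult_left_mono) auto
    finally show ?thesis .
  next
    case False
    then have k1: "1 \<le> \<bar>k\<bar>" and kK: "K \<le> \<bar>k\<bar>" using \<rho> by auto
    have "\<bar>k\<bar> powr 1 \<le> \<bar>k\<bar> powr m" using k1 m by (intro powr_mono) auto
    then have "\<bar>k\<bar> \<le> \<bar>k\<bar> powr m" using k1 by simp
    then have "a * \<bar>k\<bar> \<le> \<alpha> k" using \<alpha>K[OF kK] a by (smt (verit) mult_left_mono)
    then have "a * \<rho> \<le> \<alpha> k" using False a by (smt (verit) mult_left_mono)
    then have "a * \<rho> \<le> cmod D" using ReD nD c1 by linarith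
    have "cmod (1 - E_symbol c lam k) \<le> 1" by (rule sf(2))
    also have "1 \<le> c * d * (a * \<rho>)"
    proof -
      have "1 / (c * a * d) \<le> \<rho>" using \<rho> by simp
      then have "1 \<le> \<rho> * (c * a * d)" using c0 a d by (simp add: field_simps)
      then show ?thesis by (simp add: ac_simps)
    qed
    also have "\<dots> \<le> c * d * cmod D" using \<open>a * \<rho> \<le> cmod D\<close> c0 d by (intro mult_left_mono) auto
    finally show ?thesis .
  qed
qed


lemma is_fourier_scale:
  assumes "is_fourier u g"
  shows "is_fourier (\<lambda>x. a * u x) (\<lambda>k. a * g k)"
  using is_fourier_lin[OF assms assms, of a 0] by simp

lemma ennreal_absorb:
  fixes x :: ennreal
  assumes le: "x \<le> ennreal q * x" and q: "q < 1" and fin: "x < \<infinity>"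
  shows "x = 0"
proof -
  obtain r where r: "x = ennreal r" "0 \<le> r" using fin by (cases x) auto
  show ?thesis
  proof (cases "q \<ge> 0")
    case True
    have "ennreal r \<le> ennreal (q * r)" using le r True by (simp add: ennreal_mult')
    then have "r \<le> q * r" using r True by (simp add: ennreal_le_iff)
    then have "(1 - q) * r \<le> 0" by (simp add: algebra_simps)
    then have "r = 0" using q r by (simp add: mult_le_0_iff)
    then show ?thesis using r by simp
  next
    case False
    then have "ennreal q = 0" by (simp add: ennreal_eq_0_iff)
    then show ?thesis using le by simp
  qed
qed

theorem mainTheorem7:
  fixes f f' :: "real \<Rightarrow> real" and \<alpha> :: "real \<Rightarrow> real" and m a b c :: real
    and uc :: "real \<Rightarrow> real"
  assumes f_deriv: "\<And>x. (f has_real_derivative f' x) (at x)"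
    and f'_cont: "continuous_on UNIV f'"
    and f0: "f 0 = 0" and f'0: "f' 0 = 0"
    and \<alpha>_nonneg: "\<And>k. \<alpha> k \<ge> 0"
    and \<alpha>_meas: "\<alpha> \<in> borel_measurable borel"
    and \<alpha>_locbdd: "\<And>K. compact K \<Longrightarrow> bounded (\<alpha> ` K)"
    and m_ge: "m \<ge> 1" and a_pos: "a > 0" and b_pos: "b > 0"
    and \<alpha>_growth: "\<exists>K. \<forall>k. \<bar>k\<bar> \<ge> K \<longrightarrow> a * \<bar>k\<bar> powr m \<le> \<alpha> k \<and> \<alpha> k \<le> b * \<bar>k\<bar> powr m"
    and c_gt: "c > 1"
    and uc_Hm: "Hm m (\<lambda>x. complex_of_real (uc x))"
    and uc_eq: "\<exists>v. fmult (\<lambda>k. complex_of_real (\<alpha> k)) (\<lambda>x. complex_of_real (uc x)) v \<and>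
                   (AE x in lborel. v x + complex_of_real ((1 - 1 / c) * uc x - (1 / c) * f (uc x)) = 0)"
    and uc_decay: "(uc \<longlongrightarrow> 0) at_infinity"
    and f'uc_nonzero: "\<not> (AE x in lborel. f' (uc x) = 0)"
  shows "\<exists>\<Lambda>>0. \<forall>lam>\<Lambda>. \<forall>z::complex. Re z \<le> 0 \<longrightarrow> \<not> is_eigenvalue_A \<alpha> m c f' uc lam z"
proof -
  have c0: "c > 0" and c1: "0 < 1 - 1 / c" using c_gt by (auto simp: field_simps)
  have ucm[measurable]: "uc \<in> borel_measurable borel"
  proof -
    have "(\<lambda>x. complex_of_real (uc x)) \<in> borel_measurable borel"
      using uc_Hm by (auto simp: Hm_def L2_meas)
    then have "(\<lambda>x. Re (complex_of_real (uc x))) \<in> borel_measurable borel" by measurable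
    then show ?thesis by simp
  qed
  have f'm[measurable]: "f' \<in> borel_measurable borel"
    using f'_cont by (rule borel_measurable_continuous_onI)
  obtain Cu where Cu: "AE x in lborel. cmod (complex_of_real (uc x)) \<le> Cu"
    using Hm_bounded[OF m_ge uc_Hm] by blast
  have "bounded (f' ` {-Cu..Cu})"
    by (rule compact_imp_bounded[OF compact_continuous_image[OF continuous_on_subset[OF f'_cont] compact_Icc]]) auto
  then obtain S0 where S0: "\<And>y. y \<in> {-Cu..Cu} \<Longrightarrow> \<bar>f' y\<bar> \<le> S0"
    unfolding bounded_real by blast
  define S where "S = \<bar>S0\<bar>"
  have S0': "0 \<le> S" by (simp add: S_def)
  have fS: "AE x in lborel. \<bar>f' (uc x)\<bar> \<le> S"
    using Cu
  proof eventually_elim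
    case (elim x)
    then have "uc x \<in> {-Cu..Cu}" by auto
    then show ?case using S0[of "uc x"] by (simp add: S_def)
  qed
  obtain K where K: "\<And>k. \<bar>k\<bar> \<ge> K \<Longrightarrow> a * \<bar>k\<bar> powr m \<le> \<alpha> k"
    using \<alpha>_growth by blast
  define d where "d = 1 / (2 * (S + 1))"
  have d0: "d > 0" using S0' by (simp add: d_def)
  define \<rho> where "\<rho> = max (max 1 K) (1 / (c * a * d))"
  have \<rho>: "\<rho> \<ge> 1" "\<rho> \<ge> K" "\<rho> \<ge> 1 / (c * a * d)" by (auto simp: \<rho>_def)
  define \<Lambda> where "\<Lambda> = \<rho> / (d * (1 - 1 / c))"
  have \<Lambda>0: "\<Lambda> > 0" using \<rho> d0 c1 by (simp add: \<Lambda>_def)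
  have q1: "d\<^sup>2 * (4 * pi * (S\<^sup>2 * (1 / (2 * pi)))) < 1"
  proof -
    have "d\<^sup>2 * (4 * pi * (S\<^sup>2 * (1 / (2 * pi)))) = 2 * S\<^sup>2 / (4 * (S + 1)\<^sup>2)"
      by (simp add: d_def power_divide field_simps power2_eq_square)
    also have "\<dots> < 1"
    proof -
      have "S\<^sup>2 < (S + 1)\<^sup>2" using S0' by (intro power_strict_mono) auto
      moreover have "0 \<le> (S + 1)\<^sup>2" by simp
      ultimately have "2 * S\<^sup>2 < 4 * (S + 1)\<^sup>2" by linarith
      moreover have "0 < 4 * (S + 1)\<^sup>2" using S0' by simp
      ultimately show ?thesis by simp
    qed
    finally show ?thesis .
  qed
  show ?thesis
  proof (intro exI[of _ \<Lambda>] conjI allI impI)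
    show "\<Lambda> > 0" by (rule \<Lambda>0)
    fix lam :: real and z :: complex
    assume lam: "lam > \<Lambda>" and z: "Re z \<le> 0"
    show "\<not> is_eigenvalue_A \<alpha> m c f' uc lam z"
    proof
      assume "is_eigenvalue_A \<alpha> m c f' uc lam z"
      then obtain w where Hw: "Hm m w" and nz: "\<not> (AE x in lborel. w x = 0)"
        and A: "A_rel \<alpha> c f' uc lam w (\<lambda>x. z * w x)"
        unfolding is_eigenvalue_A_def by blast
      obtain g where Fw: "is_fourier w g" using Hw unfolding Hm_def by blast
      have gi: "integrable lborel g" by (rule Hm_integrable[OF m_ge Hw Fw])
      have wL: "L2 w" and gL: "L2 g" using Fw by (auto simp: is_fourier_Fr)
      have wm[measurable]: "w \<in> borel_measurable borel" using wL by (rule L2_meas)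
      from A obtain v1 v2 where fm1: "fmult (\<lambda>k. complex_of_real (\<alpha> k)) w v1"
        and fm2: "fmult (\<lambda>k. 1 - E_symbol c lam k) (\<lambda>x. (1 + complex_of_real (f' (uc x))) * w x) v2"
        and AE1: "AE x in lborel. z * w x = v1 x + w x - v2 x / complex_of_real c"
        unfolding A_rel_def by blast
      from fm1 obtain g1 where Fw1: "is_fourier w g1" and Fv1: "is_fourier v1 (\<lambda>k. complex_of_real (\<alpha> k) * g1 k)"
        unfolding fmult_def by blast
      from fm2 obtain g2 where FW2: "is_fourier (\<lambda>x. (1 + complex_of_real (f' (uc x))) * w x) g2"
        and Fv2: "is_fourier v2 (\<lambda>k. (1 - E_symbol c lam k) * g2 k)"
        unfolding fmult_def by blast
      define G where "G k = 1 * (1 * (complex_of_real (\<alpha> k) * g1 k) + 1 * g1 k) +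
          (- 1 / complex_of_real c) * ((1 - E_symbol c lam k) * g2 k)" for k
      have F1: "is_fourier (\<lambda>x. 1 * (1 * v1 x + 1 * w x) + (- 1 / complex_of_real c) * v2 x) G"
        unfolding G_def by (intro is_fourier_lin Fv1 Fw1 Fv2)
      have F2: "is_fourier (\<lambda>x. z * w x) G"
      proof (rule is_fourier_cong_AE[OF F1])
        show "AE x in lborel. 1 * (1 * v1 x + 1 * w x) + (- 1 / complex_of_real c) * v2 x = z * w x"
          using AE1 by eventually_elim (simp add: field_simps)
      qed simp
      have F3: "is_fourier (\<lambda>x. z * w x) (\<lambda>k. z * g k)" by (rule is_fourier_scale[OF Fw])
      have U1: "AE k in lborel. G k = z * g k" by (rule is_fourier_unique[OF F2 F3])
      have U2: "AE k in lborel. g1 k = g k" by (rule is_fourier_unique[OF Fw1 Fw])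
      define hh where "hh k = g2 k - g k" for k
      have Fh: "is_fourier (\<lambda>x. complex_of_real (f' (uc x)) * w x) hh"
      proof -
        have "is_fourier (\<lambda>x. 1 * ((1 + complex_of_real (f' (uc x))) * w x) + (-1) * w x) (\<lambda>k. 1 * g2 k + (-1) * g k)"
          by (rule is_fourier_lin[OF FW2 Fw])
        moreover have "(\<lambda>x. 1 * ((1 + complex_of_real (f' (uc x))) * w x) + (-1) * w x) = (\<lambda>x. complex_of_real (f' (uc x)) * w x)"
          by (auto simp: algebra_simps)
        moreover have "(\<lambda>k. 1 * g2 k + (-1) * g k) = hh" by (auto simp: hh_def)
        ultimately show ?thesis by simp
      qed
      have gb: "AE k in lborel. cmod (g k) \<le> d * cmod (hh k)"
        using U1 U2
      proof eventually_elim
        case (elim k)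
        define E where "E = E_symbol c lam k"
        define D where "D = complex_of_real (\<alpha> k) + 1 - z - (1 - E) / complex_of_real c"
        have sb: "D \<noteq> 0" "cmod (1 - E) \<le> c * d * cmod D"
        proof -
          have lr: "lam > \<rho> / (d * (1 - 1 / c))" using lam by (simp add: \<Lambda>_def)
          note S = symbol_bound[where \<alpha>=\<alpha> and k=k and K=K, OF c_gt a_pos d0 m_ge \<rho> lr \<alpha>_nonneg[of k] K[of k] z]
          show "D \<noteq> 0" "cmod (1 - E) \<le> c * d * cmod D" unfolding D_def E_def using S by auto
        qed
        have cc: "complex_of_real c \<noteq> 0" using c0 by simp
        have "z * g k = complex_of_real (\<alpha> k) * g k + g k - (1 - E) * (hh k + g k) / complex_of_real c"
          using elim by (simp add: G_def hh_def E_def field_simps)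
        then have "D * g k = (1 - E) * hh k / complex_of_real c"
          unfolding D_def using cc by (simp add: field_simps)
        then have "cmod (D * g k) = cmod ((1 - E) * hh k / complex_of_real c)" by (rule arg_cong)
        then have "cmod D * cmod (g k) = cmod (1 - E) * cmod (hh k) / c"
          using c0 by (simp only: norm_mult norm_divide norm_of_real abs_of_pos)
        also have "\<dots> \<le> (c * d * cmod D) * cmod (hh k) / c"
          using sb(2) c0 by (intro divide_right_mono mult_right_mono) auto
        also have "\<dots> = cmod D * (d * cmod (hh k))" using c0 by (simp add: field_simps)
        finally show ?case using sb(1) by simp
      qed
      have c1': "nn2 g \<le> ennreal (d\<^sup>2) * nn2 hh"
      proof -
        have "nn2 g \<le> (\<integral>\<^sup>+k. ennreal (d\<^sup>2) * ennreal ((cmod (hh k))\<^sup>2) \<partial>lborel)"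
          unfolding nn2_def
        proof (rule nn_integral_mono_AE)
          show "AE k in lborel. ennreal ((cmod (g k))\<^sup>2) \<le> ennreal (d\<^sup>2) * ennreal ((cmod (hh k))\<^sup>2)"
            using gb
          proof eventually_elim
            case (elim k)
            then have "(cmod (g k))\<^sup>2 \<le> (d * cmod (hh k))\<^sup>2" by (intro power_mono) auto
            then show ?case by (simp add: ennreal_mult'[symmetric] power_mult_distrib)
          qed
        qed
        also have "\<dots> = ennreal (d\<^sup>2) * nn2 hh"
        proof -
          have hhm[measurable]: "hh \<in> borel_measurable borel" using Fh by (auto simp: is_fourier_Fr L2_meas)
          show ?thesis unfolding nn2_def by (intro nn_integral_cmult) measurable
        qed
        finally show ?thesis .
      qed
      have c2: "nn2 hh \<le> ennreal (4 * pi) * nn2 (\<lambda>x. complex_of_real (f' (uc x)) * w x)"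
        by (rule fourier_upper[OF Fh])
      have c3: "nn2 (\<lambda>x. complex_of_real (f' (uc x)) * w x) \<le> ennreal (S\<^sup>2) * nn2 w"
      proof -
        have "nn2 (\<lambda>x. complex_of_real (f' (uc x)) * w x) \<le> (\<integral>\<^sup>+x. ennreal (S\<^sup>2) * ennreal ((cmod (w x))\<^sup>2) \<partial>lborel)"
          unfolding nn2_def
        proof (rule nn_integral_mono_AE)
          show "AE x in lborel. ennreal ((cmod (complex_of_real (f' (uc x)) * w x))\<^sup>2) \<le> ennreal (S\<^sup>2) * ennreal ((cmod (w x))\<^sup>2)"
            using fS
          proof eventually_elim
            case (elim x)
            then have "(\<bar>f' (uc x)\<bar> * cmod (w x))\<^sup>2 \<le> (S * cmod (w x))\<^sup>2"
              by (intro power_mono mult_right_mono) auto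
            then show ?case by (simp add: ennreal_mult'[symmetric] power_mult_distrib norm_mult)
          qed
        qed
        also have "\<dots> = ennreal (S\<^sup>2) * nn2 w"
          unfolding nn2_def by (intro nn_integral_cmult) measurable
        finally show ?thesis .
      qed
      have c4: "nn2 w \<le> ennreal (1 / (2 * pi)) * nn2 g" by (rule fourier_lower[OF Fw gi])
      have "nn2 g \<le> ennreal (d\<^sup>2) * (ennreal (4 * pi) * (ennreal (S\<^sup>2) * (ennreal (1 / (2 * pi)) * nn2 g)))"
        using c1' c2 c3 c4 by (meson mult_left_mono order_trans zero_le)
      also have "\<dots> = (ennreal (d\<^sup>2) * (ennreal (4 * pi) * (ennreal (S\<^sup>2) * ennreal (1 / (2 * pi))))) * nn2 g"
        by (simp only: mult.assoc)
      also have "ennreal (S\<^sup>2) * ennreal (1 / (2 * pi)) = ennreal (S\<^sup>2 * (1 / (2 * pi)))"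
        by (rule ennreal_mult[symmetric]) auto
      also have "ennreal (4 * pi) * ennreal (S\<^sup>2 * (1 / (2 * pi))) = ennreal (4 * pi * (S\<^sup>2 * (1 / (2 * pi))))"
        by (rule ennreal_mult[symmetric]) auto
      also have "ennreal (d\<^sup>2) * ennreal (4 * pi * (S\<^sup>2 * (1 / (2 * pi)))) = ennreal (d\<^sup>2 * (4 * pi * (S\<^sup>2 * (1 / (2 * pi)))))"
        by (rule ennreal_mult[symmetric]) auto
      finally have "nn2 g = 0"
        using q1 L2_nn2[OF gL] by (intro ennreal_absorb) auto
      then have "nn2 w = 0" using c4 by simp
      then have "AE x in lborel. ennreal ((cmod (w x))\<^sup>2) = 0"
        unfolding nn2_def by (subst (asm) nn_integral_0_iff_AE) auto
      then have "AE x in lborel. w x = 0" by eventually_elim simp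
      with nz show False by contradiction
    qed
  qed
qed


end
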